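(* Let $Q$ be a commutative automorphic loop of nilpotency class $3$, let $x,y\in Q$, and set $u_1=(x,x,y)$, $u_2=(x,y,y)$, $z_2=(x,x,u_2)$, $z_3=(x,y,u_1)$, $z_4=(x,y,u_2)$, $z_5=(y,x,u_1)$, $z_6=(y,x,u_2)$, $z_7=(y,y,u_1)$. Then $z_2=z_3=z_5$ and $z_4=z_6=z_7$.
   Context: A loop is a set with a binary operation such that all left and right translations $L_a:b\mapsto ab$, $R_a:b\mapsto ba$ are bijections and there is a two-sided identity $1$. The inner mapping group is the stabilizer of $1$ in the group generated by all translations; $Q$ is automorphic if all inner mappings are automorphisms. The associator $(a,b,c)$ is defined by $(ab)c=(a(bc))(a,b,c)$. The center $Z(Q)$ is the set of elements fixed by all inner mappings; $Z_0=1$, $Z_{i+1}(Q)$ is the preimage of $Z(Q/Z_i(Q))$, and $Q$ has nilpotency class $n$ if $Z_{n-1}(Q)\neq Q=Z_n(Q)$. *)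

theory Defs
  imports Main
begin

text \<open>A loop is given by a carrier set Q, a multiplication m and an identity e.
 Translations and all permutations in the multiplication group are made extensional
 (identity outside Q).\<close>

definition loop :: "'a set \<Rightarrow> ('a \<Rightarrow> 'a \<Rightarrow> 'a) \<Rightarrow> 'a \<Rightarrow> bool" where
  "loop Q m e \<longleftrightarrow>
     (\<forall>a\<in>Q. \<forall>b\<in>Q. m a b \<in> Q) \<and> e \<in> Q \<and>
     (\<forall>a\<in>Q. m e a = a \<and> m a e = a) \<and>
     (\<forall>a\<in>Q. bij_betw (\<lambda>b. m a b) Q Q) \<and>
     (\<forall>a\<in>Q. bij_betw (\<lambda>b. m b a) Q Q)"

definition ltrans :: "'a set \<Rightarrow> ('a \<Rightarrow> 'a \<Rightarrow> 'a) \<Rightarrow> 'a \<Rightarrow> 'a \<Rightarrow> 'a" where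
  "ltrans Q m a = (\<lambda>b. if b \<in> Q then m a b else b)"

definition rtrans :: "'a set \<Rightarrow> ('a \<Rightarrow> 'a \<Rightarrow> 'a) \<Rightarrow> 'a \<Rightarrow> 'a \<Rightarrow> 'a" where
  "rtrans Q m a = (\<lambda>b. if b \<in> Q then m b a else b)"

definition perm_inv :: "'a set \<Rightarrow> ('a \<Rightarrow> 'a) \<Rightarrow> 'a \<Rightarrow> 'a" where
  "perm_inv Q f = (\<lambda>b. if b \<in> Q then inv_into Q f b else b)"

inductive_set mlt_group :: "'a set \<Rightarrow> ('a \<Rightarrow> 'a \<Rightarrow> 'a) \<Rightarrow> ('a \<Rightarrow> 'a) set"
  for Q m where
  mlt_id: "id \<in> mlt_group Q m"
| mlt_L: "a \<in> Q \<Longrightarrow> ltrans Q m a \<in> mlt_group Q m"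
| mlt_R: "a \<in> Q \<Longrightarrow> rtrans Q m a \<in> mlt_group Q m"
| mlt_comp: "f \<in> mlt_group Q m \<Longrightarrow> g \<in> mlt_group Q m \<Longrightarrow> f \<circ> g \<in> mlt_group Q m"
| mlt_inv: "f \<in> mlt_group Q m \<Longrightarrow> perm_inv Q f \<in> mlt_group Q m"

definition inn_group :: "'a set \<Rightarrow> ('a \<Rightarrow> 'a \<Rightarrow> 'a) \<Rightarrow> 'a \<Rightarrow> ('a \<Rightarrow> 'a) set" where
  "inn_group Q m e = {f \<in> mlt_group Q m. f e = e}"

definition automorphic_loop :: "'a set \<Rightarrow> ('a \<Rightarrow> 'a \<Rightarrow> 'a) \<Rightarrow> 'a \<Rightarrow> bool" where
  "automorphic_loop Q m e \<longleftrightarrow> loop Q m e \<and>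
     (\<forall>f\<in>inn_group Q m e. \<forall>a\<in>Q. \<forall>b\<in>Q. f (m a b) = m (f a) (f b))"

definition commutative_loop :: "'a set \<Rightarrow> ('a \<Rightarrow> 'a \<Rightarrow> 'a) \<Rightarrow> 'a \<Rightarrow> bool" where
  "commutative_loop Q m e \<longleftrightarrow> loop Q m e \<and> (\<forall>a\<in>Q. \<forall>b\<in>Q. m a b = m b a)"

definition loop_center :: "'a set \<Rightarrow> ('a \<Rightarrow> 'a \<Rightarrow> 'a) \<Rightarrow> 'a \<Rightarrow> 'a set" where
  "loop_center Q m e = {a \<in> Q. \<forall>f\<in>inn_group Q m e. f a = a}"

definition ldiv :: "'a set \<Rightarrow> ('a \<Rightarrow> 'a \<Rightarrow> 'a) \<Rightarrow> 'a \<Rightarrow> 'a \<Rightarrow> 'a" where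
  "ldiv Q m x y = (THE d. d \<in> Q \<and> m x d = y)"

definition associator :: "'a set \<Rightarrow> ('a \<Rightarrow> 'a \<Rightarrow> 'a) \<Rightarrow> 'a \<Rightarrow> 'a \<Rightarrow> 'a \<Rightarrow> 'a" where
  "associator Q m a b c = ldiv Q m (m a (m b c)) (m (m a b) c)"

definition lcoset :: "('a \<Rightarrow> 'a \<Rightarrow> 'a) \<Rightarrow> 'a \<Rightarrow> 'a set \<Rightarrow> 'a set" where
  "lcoset m a N = {m a n | n. n \<in> N}"

definition quot_carrier :: "'a set \<Rightarrow> ('a \<Rightarrow> 'a \<Rightarrow> 'a) \<Rightarrow> 'a set \<Rightarrow> 'a set set" where
  "quot_carrier Q m N = {lcoset m a N | a. a \<in> Q}"

definition quot_mult :: "('a \<Rightarrow> 'a \<Rightarrow> 'a) \<Rightarrow> 'a set \<Rightarrow> 'a set \<Rightarrow> 'a set \<Rightarrow> 'a set" where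
  "quot_mult m N A B = lcoset m (m (SOME a. a \<in> A) (SOME b. b \<in> B)) N"

fun upper_center :: "'a set \<Rightarrow> ('a \<Rightarrow> 'a \<Rightarrow> 'a) \<Rightarrow> 'a \<Rightarrow> nat \<Rightarrow> 'a set" where
  "upper_center Q m e 0 = {e}"
| "upper_center Q m e (Suc i) =
     (let N = upper_center Q m e i in
      {a \<in> Q. lcoset m a N \<in> loop_center (quot_carrier Q m N) (quot_mult m N) N})"

definition nilpotency_class :: "'a set \<Rightarrow> ('a \<Rightarrow> 'a \<Rightarrow> 'a) \<Rightarrow> 'a \<Rightarrow> nat \<Rightarrow> bool" where
  "nilpotency_class Q m e n \<longleftrightarrow>
     upper_center Q m e n = Q \<and> (n > 0 \<longrightarrow> upper_center Q m e (n - 1) \<noteq> Q)"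

end

theory Submission
  imports Defs
begin

locale cl =
  fixes Q :: "'a set" and m :: "'a \<Rightarrow> 'a \<Rightarrow> 'a" and e :: 'a
  assumes lp: "loop Q m e"
    and cm: "\<And>a b. a \<in> Q \<Longrightarrow> b \<in> Q \<Longrightarrow> m a b = m b a"
begin

abbreviation ld where "ld \<equiv> ldiv Q m"

lemma mQ[intro,simp]: "a \<in> Q \<Longrightarrow> b \<in> Q \<Longrightarrow> m a b \<in> Q"
  using lp unfolding loop_def by blast
lemma eQ[simp,intro]: "e \<in> Q" using lp unfolding loop_def by blast
lemma lid[simp]: "a \<in> Q \<Longrightarrow> m e a = a" using lp unfolding loop_def by blast
lemma rid[simp]: "a \<in> Q \<Longrightarrow> m a e = a" using lp unfolding loop_def by blast
lemma Lbij: "a \<in> Q \<Longrightarrow> bij_betw (\<lambda>b. m a b) Q Q" using lp unfolding loop_def by blast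
lemma Rbij: "a \<in> Q \<Longrightarrow> bij_betw (\<lambda>b. m b a) Q Q" using lp unfolding loop_def by blast

lemma lcan: "a \<in> Q \<Longrightarrow> b \<in> Q \<Longrightarrow> c \<in> Q \<Longrightarrow> m a b = m a c \<Longrightarrow> b = c"
  using Lbij[of a] unfolding bij_betw_def inj_on_def by blast

lemma ldex: "a \<in> Q \<Longrightarrow> b \<in> Q \<Longrightarrow> \<exists>d\<in>Q. m a d = b"
  using Lbij[of a] unfolding bij_betw_def by (metis imageE)

lemma ld: assumes "a \<in> Q" "b \<in> Q" shows "ld a b \<in> Q" "m a (ld a b) = b"
proof -
  have "\<exists>!d. d \<in> Q \<and> m a d = b" using ldex[OF assms] lcan[OF assms(1)] by blast
  then have "ld a b \<in> Q \<and> m a (ld a b) = b" unfolding ldiv_def by (rule theI')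
  then show "ld a b \<in> Q" "m a (ld a b) = b" by auto
qed

lemma ldQ[intro,simp]: "a \<in> Q \<Longrightarrow> b \<in> Q \<Longrightarrow> ld a b \<in> Q" using ld by blast
lemma mld[simp]: "a \<in> Q \<Longrightarrow> b \<in> Q \<Longrightarrow> m a (ld a b) = b" using ld by blast

lemma ld_uniq: "a \<in> Q \<Longrightarrow> d \<in> Q \<Longrightarrow> m a d = b \<Longrightarrow> ld a b = d"
  using ld[of a b] lcan[of a] by (metis mQ)

lemma ld_m[simp]: "a \<in> Q \<Longrightarrow> d \<in> Q \<Longrightarrow> ld a (m a d) = d"
  using ld_uniq by blast

lemma rcan: "a \<in> Q \<Longrightarrow> b \<in> Q \<Longrightarrow> c \<in> Q \<Longrightarrow> m b a = m c a \<Longrightarrow> b = c"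
  using lcan cm by metis

lemma mlt_bij: "f \<in> mlt_group Q m \<Longrightarrow> bij_betw f Q Q"
proof (induction rule: mlt_group.induct)
  case mlt_id then show ?case by (simp add: bij_betw_def)
next
  case (mlt_L a)
  have "bij_betw (ltrans Q m a) Q Q = bij_betw (\<lambda>b. m a b) Q Q"
    by (rule bij_betw_cong) (simp add: ltrans_def)
  then show ?case using Lbij mlt_L by simp
next
  case (mlt_R a)
  have "bij_betw (rtrans Q m a) Q Q = bij_betw (\<lambda>b. m b a) Q Q"
    by (rule bij_betw_cong) (simp add: rtrans_def)
  then show ?case using Rbij mlt_R by simp
next
  case (mlt_comp f g) then show ?case using bij_betw_trans by blast
next
  case (mlt_inv f)
  have "bij_betw (perm_inv Q f) Q Q = bij_betw (inv_into Q f) Q Q"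
    by (rule bij_betw_cong) (simp add: perm_inv_def)
  then show ?case using bij_betw_inv_into mlt_inv by blast
qed

lemma mlt_Q: "f \<in> mlt_group Q m \<Longrightarrow> a \<in> Q \<Longrightarrow> f a \<in> Q"
  using mlt_bij bij_betwE by blast

lemma mlt_inj: "f \<in> mlt_group Q m \<Longrightarrow> a \<in> Q \<Longrightarrow> b \<in> Q \<Longrightarrow> f a = f b \<Longrightarrow> a = b"
  using mlt_bij unfolding bij_betw_def inj_on_def by blast

lemma pinv_f: "f \<in> mlt_group Q m \<Longrightarrow> a \<in> Q \<Longrightarrow> perm_inv Q f (f a) = a"
  using mlt_bij[of f] mlt_Q[of f a] unfolding perm_inv_def bij_betw_def
  by (simp add: inv_into_f_f)

lemma f_pinv: "f \<in> mlt_group Q m \<Longrightarrow> a \<in> Q \<Longrightarrow> f (perm_inv Q f a) = a"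
  using mlt_bij[of f] unfolding perm_inv_def bij_betw_def
  by (simp add: f_inv_into_f)

lemma pinv_Q: "f \<in> mlt_group Q m \<Longrightarrow> a \<in> Q \<Longrightarrow> perm_inv Q f a \<in> Q"
  using mlt_Q mlt_inv by blast

lemma pinv_ltrans: "p \<in> Q \<Longrightarrow> x \<in> Q \<Longrightarrow> perm_inv Q (ltrans Q m p) x = ld p x"
  using pinv_f[of "ltrans Q m p" "ld p x"] mlt_L[of p Q m]
  by (simp add: ltrans_def)

definition phi where "phi a b c = ld (m a b) (m a (m b c))"

definition phif where "phif a b = perm_inv Q (ltrans Q m (m a b)) \<circ> ltrans Q m a \<circ> ltrans Q m b"

lemma phif_eq: "a \<in> Q \<Longrightarrow> b \<in> Q \<Longrightarrow> c \<in> Q \<Longrightarrow> phif a b c = phi a b c"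
  using pinv_ltrans[of "m a b" "m a (m b c)"] by (simp add: phif_def phi_def ltrans_def)

lemma phif_inn: "a \<in> Q \<Longrightarrow> b \<in> Q \<Longrightarrow> phif a b \<in> inn_group Q m e"
proof -
  assume a: "a \<in> Q" "b \<in> Q"
  have "phif a b \<in> mlt_group Q m" unfolding phif_def
    by (intro mlt_comp mlt_inv mlt_L) (simp_all add: a)
  moreover have "phif a b e = e" using phif_eq[OF a eQ] a by (simp add: phi_def ld_uniq)
  ultimately show ?thesis unfolding inn_group_def by blast
qed

end

context cl begin

definition nsub where
  "nsub N \<longleftrightarrow> N \<subseteq> Q \<and> e \<in> N \<and> (\<forall>a\<in>N. \<forall>b\<in>N. m a b \<in> N) \<and> (\<forall>a\<in>N. \<forall>b\<in>N. ld a b \<in> N)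
     \<and> (\<forall>f\<in>inn_group Q m e. \<forall>n\<in>N. f n \<in> N)"

abbreviation lc where "lc a N \<equiv> lcoset m a N"

lemma inn_mlt: "f \<in> inn_group Q m e \<Longrightarrow> f \<in> mlt_group Q m" by (simp add: inn_group_def)
lemma inn_e: "f \<in> inn_group Q m e \<Longrightarrow> f e = e" by (simp add: inn_group_def)

lemma inn_inv: assumes "f \<in> inn_group Q m e" shows "perm_inv Q f \<in> inn_group Q m e"
proof -
  have f: "f \<in> mlt_group Q m" "f e = e" using assms by (auto simp: inn_group_def)
  have "perm_inv Q f e = e" using pinv_f[OF f(1) eQ] f(2) by simp
  then show ?thesis using mlt_inv[OF f(1)] by (simp add: inn_group_def)
qed

lemma inn_comp: "f \<in> inn_group Q m e \<Longrightarrow> g \<in> inn_group Q m e \<Longrightarrow> f \<circ> g \<in> inn_group Q m e"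
  unfolding inn_group_def by (auto intro: mlt_comp)

lemma phi_eq: "a \<in> Q \<Longrightarrow> b \<in> Q \<Longrightarrow> c \<in> Q \<Longrightarrow> m a (m b c) = m (m a b) (phi a b c)"
  unfolding phi_def by simp

lemma phiQ[intro,simp]: "a \<in> Q \<Longrightarrow> b \<in> Q \<Longrightarrow> c \<in> Q \<Longrightarrow> phi a b c \<in> Q"
  unfolding phi_def by simp

context
  fixes N assumes ns: "nsub N"
begin

lemma NQ: "n \<in> N \<Longrightarrow> n \<in> Q" using ns unfolding nsub_def by blast
lemma Ne: "e \<in> N" using ns unfolding nsub_def by blast
lemma Nm: "a \<in> N \<Longrightarrow> b \<in> N \<Longrightarrow> m a b \<in> N" using ns unfolding nsub_def by blast
lemma Nld: "a \<in> N \<Longrightarrow> b \<in> N \<Longrightarrow> ld a b \<in> N" using ns unfolding nsub_def by blast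
lemma Ninn: "f \<in> inn_group Q m e \<Longrightarrow> n \<in> N \<Longrightarrow> f n \<in> N" using ns unfolding nsub_def by blast

lemma lcE: "x \<in> lc a N \<Longrightarrow> \<exists>n\<in>N. x = m a n"
  unfolding lcoset_def by blast

lemma lcI: "n \<in> N \<Longrightarrow> m a n \<in> lc a N"
  unfolding lcoset_def by blast

lemma lc_mem: "a \<in> Q \<Longrightarrow> a \<in> lc a N"
  using lcI[OF Ne, of a] by simp

lemma lcQ: "a \<in> Q \<Longrightarrow> lc a N \<subseteq> Q"
  using lcE NQ by blast

lemma C1: assumes a: "a \<in> Q" and n: "n \<in> N" shows "lc (m a n) N = lc a N"
proof
  have nQ: "n \<in> Q" using NQ n .
  let ?p = "phif a n"
  have pi: "?p \<in> inn_group Q m e" using phif_inn a nQ by blast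
  show "lc (m a n) N \<subseteq> lc a N"
  proof
    fix x assume "x \<in> lc (m a n) N"
    then obtain n' where n': "n' \<in> N" "x = m (m a n) n'" using lcE by blast
    define w where "w = perm_inv Q ?p n'"
    have wN: "w \<in> N" unfolding w_def using Ninn[OF inn_inv[OF pi] n'(1)] .
    have wQ: "w \<in> Q" using NQ wN .
    have "?p w = n'" unfolding w_def using f_pinv inn_mlt[OF pi] NQ n'(1) by blast
    then have "phi a n w = n'" using phif_eq a nQ wQ by simp
    then have "m a (m n w) = x" using phi_eq[OF a nQ wQ] n' by simp
    then show "x \<in> lc a N" using lcI Nm[OF n wN] by metis
  qed
  show "lc a N \<subseteq> lc (m a n) N"
  proof
    fix x assume "x \<in> lc a N"
    then obtain n'' where n'': "n'' \<in> N" "x = m a n''" using lcE by blast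
    define v where "v = ld n n''"
    have vN: "v \<in> N" unfolding v_def using Nld n n'' by blast
    have vQ: "v \<in> Q" using NQ vN .
    have "m n v = n''" unfolding v_def using nQ NQ n'' by simp
    then have "x = m (m a n) (phi a n v)" using phi_eq[OF a nQ vQ] n'' by simp
    moreover have "phi a n v \<in> N" using Ninn[OF pi vN] phif_eq a nQ vQ by simp
    ultimately show "x \<in> lc (m a n) N" using lcI by metis
  qed
qed

lemma C2: assumes "a \<in> Q" "b \<in> Q" shows "lc a N = lc b N \<longleftrightarrow> (\<exists>n\<in>N. a = m b n)"
  using C1 lc_mem lcE assms by metis

lemma C3a: assumes x: "x \<in> Q" and y: "y \<in> Q" and n: "n \<in> N"
  shows "lc (m x (m y n)) N = lc (m x y) N"
proof -
  have nQ: "n \<in> Q" using NQ n .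
  have "m x (m y n) = m (m x y) (phi x y n)" using phi_eq x y nQ by simp
  moreover have "phi x y n \<in> N" using Ninn[OF phif_inn[OF x y] n] phif_eq x y nQ by simp
  ultimately show ?thesis using C1 x y by simp
qed

lemma C3: assumes a: "a \<in> Q" and b: "b \<in> Q" and n1: "n1 \<in> N" and n2: "n2 \<in> N"
  shows "lc (m (m a n1) (m b n2)) N = lc (m a b) N"
proof -
  have q1: "n1 \<in> Q" "n2 \<in> Q" using NQ n1 n2 by auto
  have "lc (m (m a n1) (m b n2)) N = lc (m (m a n1) b) N" using C3a a b q1 n2 by simp
  also have "m (m a n1) b = m b (m a n1)" using cm a b q1 by simp
  also have "lc (m b (m a n1)) N = lc (m b a) N" using C3a a b n1 by simp
  also have "m b a = m a b" using cm a b by simp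
  finally show ?thesis .
qed

lemma qm_lc: assumes a: "a \<in> Q" and b: "b \<in> Q"
  shows "quot_mult m N (lc a N) (lc b N) = lc (m a b) N"
proof -
  obtain n1 where n1: "n1 \<in> N" "(SOME x. x \<in> lc a N) = m a n1"
    using someI[of "\<lambda>x. x \<in> lc a N" a] lc_mem[OF a] lcE by blast
  obtain n2 where n2: "n2 \<in> N" "(SOME x. x \<in> lc b N) = m b n2"
    using someI[of "\<lambda>x. x \<in> lc b N" b] lc_mem[OF b] lcE by blast
  show ?thesis unfolding quot_mult_def n1(2) n2(2) using C3 a b n1 n2 by simp
qed

lemma qc_lc: "a \<in> Q \<Longrightarrow> lc a N \<in> quot_carrier Q m N"
  unfolding quot_carrier_def by blast

lemma qcE: "X \<in> quot_carrier Q m N \<Longrightarrow> \<exists>a\<in>Q. X = lc a N"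
  unfolding quot_carrier_def by blast

lemma lc_e: "lc e N = N"
proof
  show "lc e N \<subseteq> N" using lcE NQ by fastforce
  show "N \<subseteq> lc e N"
  proof
    fix n assume n: "n \<in> N"
    then have "m e n \<in> lc e N" by (rule lcI)
    then show "n \<in> lc e N" using NQ n by simp
  qed
qed

lemma respects: "f \<in> mlt_group Q m \<Longrightarrow> a \<in> Q \<Longrightarrow> b \<in> Q \<Longrightarrow>
   (lc (f a) N = lc (f b) N \<longleftrightarrow> lc a N = lc b N)"
proof (induction arbitrary: a b rule: mlt_group.induct)
  case mlt_id then show ?case by simp
next
  case (mlt_L c)
  have key: "lc (m c a) N = lc (m c b) N \<longleftrightarrow> lc a N = lc b N" if ab: "a \<in> Q" "b \<in> Q" and c: "c \<in> Q" for a b c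
  proof
    assume "lc a N = lc b N"
    then obtain n where n: "n \<in> N" "a = m b n" using C2 ab by blast
    show "lc (m c a) N = lc (m c b) N" using C3a c ab n by simp
  next
    assume "lc (m c a) N = lc (m c b) N"
    then obtain n where n: "n \<in> N" "m c a = m (m c b) n" using C2 ab c by blast
    let ?p = "phif c b"
    have pi: "?p \<in> inn_group Q m e" using phif_inn c ab by blast
    define w where "w = perm_inv Q ?p n"
    have wN: "w \<in> N" unfolding w_def using Ninn[OF inn_inv[OF pi] n(1)] .
    have wQ: "w \<in> Q" using NQ wN .
    have "?p w = n" unfolding w_def using f_pinv inn_mlt[OF pi] NQ n(1) by blast
    then have "phi c b w = n" using phif_eq c ab wQ by simp
    then have "m c (m b w) = m c a" using phi_eq[OF c ab(2) wQ] n by simp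
    then have "a = m b w" using lcan c ab wQ by (metis mQ)
    then show "lc a N = lc b N" using C1 ab wN by simp
  qed
  show ?case using key mlt_L by (simp add: ltrans_def)
next
  case (mlt_R c)
  have "lc (m c a) N = lc (m c b) N \<longleftrightarrow> lc a N = lc b N"
  proof
    assume "lc a N = lc b N"
    then obtain n where n: "n \<in> N" "a = m b n" using C2 mlt_R by blast
    show "lc (m c a) N = lc (m c b) N" using C3a mlt_R n by simp
  next
    assume "lc (m c a) N = lc (m c b) N"
    then obtain n where n: "n \<in> N" "m c a = m (m c b) n" using C2 mlt_R by blast
    let ?p = "phif c b"
    have pi: "?p \<in> inn_group Q m e" using phif_inn mlt_R by blast
    define w where "w = perm_inv Q ?p n"
    have wN: "w \<in> N" unfolding w_def using Ninn[OF inn_inv[OF pi] n(1)] .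
    have wQ: "w \<in> Q" using NQ wN .
    have "?p w = n" unfolding w_def using f_pinv inn_mlt[OF pi] NQ n(1) by blast
    then have "phi c b w = n" using phif_eq mlt_R wQ by simp
    then have "m c (m b w) = m c a" using phi_eq[of c b w] mlt_R wQ n by simp
    then have "a = m b w" using lcan mlt_R wQ by (metis mQ)
    then show "lc a N = lc b N" using C1 mlt_R wN by simp
  qed
  then show ?case using mlt_R cm by (simp add: rtrans_def)
next
  case (mlt_comp f g)
  then show ?case using mlt_Q by simp
next
  case (mlt_inv f)
  have "lc (f (perm_inv Q f a)) N = lc (f (perm_inv Q f b)) N \<longleftrightarrow>
        lc (perm_inv Q f a) N = lc (perm_inv Q f b) N"
    using mlt_inv pinv_Q by blast
  then show ?case using f_pinv[of f a] f_pinv[of f b] mlt_inv by simp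
qed

lemma induce: "f \<in> mlt_group Q m \<Longrightarrow>
  \<exists>F\<in>mlt_group (quot_carrier Q m N) (quot_mult m N). \<forall>a\<in>Q. F (lc a N) = lc (f a) N"
proof (induction rule: mlt_group.induct)
  case mlt_id then show ?case by (intro bexI[of _ id] mlt_group.mlt_id) simp
next
  case (mlt_L c)
  have c: "c \<in> Q" by fact
  show ?case
  proof (rule bexI[of _ "ltrans (quot_carrier Q m N) (quot_mult m N) (lc c N)"])
    show "\<forall>a\<in>Q. ltrans (quot_carrier Q m N) (quot_mult m N) (lc c N) (lc a N) = lc (ltrans Q m c a) N"
      using c qc_lc qm_lc by (simp add: ltrans_def)
    show "ltrans (quot_carrier Q m N) (quot_mult m N) (lc c N) \<in> mlt_group (quot_carrier Q m N) (quot_mult m N)"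
      by (rule mlt_group.mlt_L) (rule qc_lc[OF c])
  qed
next
  case (mlt_R c)
  have c: "c \<in> Q" by fact
  show ?case
  proof (rule bexI[of _ "rtrans (quot_carrier Q m N) (quot_mult m N) (lc c N)"])
    show "\<forall>a\<in>Q. rtrans (quot_carrier Q m N) (quot_mult m N) (lc c N) (lc a N) = lc (rtrans Q m c a) N"
      using c qc_lc qm_lc by (simp add: rtrans_def)
    show "rtrans (quot_carrier Q m N) (quot_mult m N) (lc c N) \<in> mlt_group (quot_carrier Q m N) (quot_mult m N)"
      by (rule mlt_group.mlt_R) (rule qc_lc[OF c])
  qed
next
  case (mlt_comp f g)
  then obtain F G where "F \<in> mlt_group (quot_carrier Q m N) (quot_mult m N)" "\<forall>a\<in>Q. F (lc a N) = lc (f a) N"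
    "G \<in> mlt_group (quot_carrier Q m N) (quot_mult m N)" "\<forall>a\<in>Q. G (lc a N) = lc (g a) N" by blast
  then show ?case using mlt_Q[OF mlt_comp.hyps(2)]
    by (intro bexI[of _ "F \<circ> G"] mlt_group.mlt_comp) auto
next
  case (mlt_inv f)
  have fm: "f \<in> mlt_group Q m" by fact
  obtain F where F: "F \<in> mlt_group (quot_carrier Q m N) (quot_mult m N)" "\<forall>a\<in>Q. F (lc a N) = lc (f a) N"
    using mlt_inv.IH by blast
  have inj: "inj_on F (quot_carrier Q m N)"
  proof (rule inj_onI)
    fix X Y assume X: "X \<in> quot_carrier Q m N" and Y: "Y \<in> quot_carrier Q m N" and eq: "F X = F Y"
    obtain x where x: "x \<in> Q" "X = lc x N" using qcE X by blast
    obtain y where y: "y \<in> Q" "Y = lc y N" using qcE Y by blast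
    have "lc (f x) N = lc (f y) N" using eq F(2) x y by simp
    then show "X = Y" using respects[OF fm x(1) y(1)] x y by simp
  qed
  have "\<forall>a\<in>Q. perm_inv (quot_carrier Q m N) F (lc a N) = lc (perm_inv Q f a) N"
  proof
    fix a assume a: "a \<in> Q"
    have pa: "perm_inv Q f a \<in> Q" using pinv_Q[OF fm a] .
    have "F (lc (perm_inv Q f a) N) = lc a N" using F(2) pa f_pinv[OF fm a] by simp
    then have "inv_into (quot_carrier Q m N) F (lc a N) = lc (perm_inv Q f a) N"
      using inv_into_f_eq[OF inj qc_lc[OF pa]] by blast
    then show "perm_inv (quot_carrier Q m N) F (lc a N) = lc (perm_inv Q f a) N"
      using qc_lc[OF a] by (simp add: perm_inv_def)
  qed
  then show ?case using mlt_group.mlt_inv[OF F(1)] by (intro bexI)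
qed

lemma lift: "F \<in> mlt_group (quot_carrier Q m N) (quot_mult m N) \<Longrightarrow>
  \<exists>f\<in>mlt_group Q m. \<forall>a\<in>Q. F (lc a N) = lc (f a) N"
proof (induction rule: mlt_group.induct)
  case mlt_id then show ?case by (intro bexI[of _ id] mlt_group.mlt_id) simp
next
  case (mlt_L A)
  then obtain c where c: "c \<in> Q" "A = lc c N" using qcE by blast
  show ?case
  proof (rule bexI[of _ "ltrans Q m c"])
    show "\<forall>a\<in>Q. ltrans (quot_carrier Q m N) (quot_mult m N) A (lc a N) = lc (ltrans Q m c a) N"
      using c qc_lc qm_lc by (simp add: ltrans_def)
    show "ltrans Q m c \<in> mlt_group Q m" by (rule mlt_group.mlt_L) (rule c(1))
  qed
next
  case (mlt_R A)
  then obtain c where c: "c \<in> Q" "A = lc c N" using qcE by blast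
  show ?case
  proof (rule bexI[of _ "rtrans Q m c"])
    show "\<forall>a\<in>Q. rtrans (quot_carrier Q m N) (quot_mult m N) A (lc a N) = lc (rtrans Q m c a) N"
      using c qc_lc qm_lc by (simp add: rtrans_def)
    show "rtrans Q m c \<in> mlt_group Q m" by (rule mlt_group.mlt_R) (rule c(1))
  qed
next
  case (mlt_comp F G)
  then obtain f g where "f \<in> mlt_group Q m" "\<forall>a\<in>Q. F (lc a N) = lc (f a) N"
    "g \<in> mlt_group Q m" "\<forall>a\<in>Q. G (lc a N) = lc (g a) N" by blast
  then show ?case using mlt_Q[of g]
    by (intro bexI[of _ "f \<circ> g"] mlt_group.mlt_comp) auto
next
  case (mlt_inv F)
  obtain f where f: "f \<in> mlt_group Q m" "\<forall>a\<in>Q. F (lc a N) = lc (f a) N"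
    using mlt_inv.IH by blast
  have inj: "inj_on F (quot_carrier Q m N)"
  proof (rule inj_onI)
    fix X Y assume X: "X \<in> quot_carrier Q m N" and Y: "Y \<in> quot_carrier Q m N" and eq: "F X = F Y"
    obtain x where x: "x \<in> Q" "X = lc x N" using qcE X by blast
    obtain y where y: "y \<in> Q" "Y = lc y N" using qcE Y by blast
    have "lc (f x) N = lc (f y) N" using eq f(2) x y by simp
    then show "X = Y" using respects[OF f(1) x(1) y(1)] x y by simp
  qed
  have "\<forall>a\<in>Q. perm_inv (quot_carrier Q m N) F (lc a N) = lc (perm_inv Q f a) N"
  proof
    fix a assume a: "a \<in> Q"
    have pa: "perm_inv Q f a \<in> Q" using pinv_Q[OF f(1) a] .
    have "F (lc (perm_inv Q f a) N) = lc a N" using f(2) pa f_pinv[OF f(1) a] by simp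
    then have "inv_into (quot_carrier Q m N) F (lc a N) = lc (perm_inv Q f a) N"
      using inv_into_f_eq[OF inj qc_lc[OF pa]] by blast
    then show "perm_inv (quot_carrier Q m N) F (lc a N) = lc (perm_inv Q f a) N"
      using qc_lc[OF a] by (simp add: perm_inv_def)
  qed
  then show ?case using mlt_group.mlt_inv[OF f(1)] by (intro bexI)
qed

lemma UC: assumes a: "a \<in> Q"
  shows "lc a N \<in> loop_center (quot_carrier Q m N) (quot_mult m N) N \<longleftrightarrow>
         (\<forall>g\<in>inn_group Q m e. lc (g a) N = lc a N)"
proof
  assume H: "lc a N \<in> loop_center (quot_carrier Q m N) (quot_mult m N) N"
  show "\<forall>g\<in>inn_group Q m e. lc (g a) N = lc a N"
  proof
    fix g assume g: "g \<in> inn_group Q m e"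
    obtain G where G: "G \<in> mlt_group (quot_carrier Q m N) (quot_mult m N)" "\<forall>b\<in>Q. G (lc b N) = lc (g b) N"
      using induce inn_mlt[OF g] by blast
    have "G N = N" using G(2) lc_e inn_e[OF g] by (metis eQ)
    then have "G \<in> inn_group (quot_carrier Q m N) (quot_mult m N) N" using G(1) by (simp add: inn_group_def)
    then have "G (lc a N) = lc a N" using H by (simp add: loop_center_def)
    then show "lc (g a) N = lc a N" using G(2) a by simp
  qed
next
  assume H: "\<forall>g\<in>inn_group Q m e. lc (g a) N = lc a N"
  have "\<forall>F\<in>inn_group (quot_carrier Q m N) (quot_mult m N) N. F (lc a N) = lc a N"
  proof
    fix F assume F: "F \<in> inn_group (quot_carrier Q m N) (quot_mult m N) N"
    have Fm: "F \<in> mlt_group (quot_carrier Q m N) (quot_mult m N)" using F by (simp add: inn_group_def)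
    obtain f where f: "f \<in> mlt_group Q m" "\<forall>b\<in>Q. F (lc b N) = lc (f b) N"
      using lift[OF Fm] by blast
    have FN: "F N = N" using F by (simp add: inn_group_def)
    have "lc (f e) N = F (lc e N)" using f(2) by simp
    also have "\<dots> = lc e N" using FN lc_e by simp
    finally have "lc (f e) N = lc e N" .
    then obtain n where n: "n \<in> N" "f e = m e n" using C2 mlt_Q f by (metis eQ)
    have feN: "f e \<in> N" using n NQ by simp
    have feQ: "f e \<in> Q" using NQ feN by simp
    define g where "g = perm_inv Q (ltrans Q m (f e)) \<circ> f"
    have gm: "g \<in> mlt_group Q m" unfolding g_def using f feQ by (intro mlt_comp mlt_inv mlt_L)
    have gb: "g b = ld (f e) (f b)" if "b \<in> Q" for b
      unfolding g_def using pinv_ltrans feQ mlt_Q f that by simp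
    have "g e = e" using gb[OF eQ] feQ ld_uniq by simp
    then have gi: "g \<in> inn_group Q m e" using gm by (simp add: inn_group_def)
    have "F (lc b N) = lc (g b) N" if b: "b \<in> Q" for b
    proof -
      have fb: "f b \<in> Q" using mlt_Q f b by simp
      have gbQ: "g b \<in> Q" using gb b feQ fb by simp
      have "f b = m (f e) (g b)" using gb b feQ fb by simp
      also have "\<dots> = m (g b) (f e)" using cm feQ gbQ by simp
      finally have "f b = m (g b) (f e)" .
      then have "lc (f b) N = lc (g b) N" using C1[OF gbQ feN] by simp
      then show ?thesis using f b by simp
    qed
    then show "F (lc a N) = lc a N" using H gi a by simp
  qed
  then show "lc a N \<in> loop_center (quot_carrier Q m N) (quot_mult m N) N"
    unfolding loop_center_def using qc_lc a by blast
qed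

end
end

locale cla = cl +
  assumes aut: "automorphic_loop Q m e"
begin

lemma inn_hom: "f \<in> inn_group Q m e \<Longrightarrow> a \<in> Q \<Longrightarrow> b \<in> Q \<Longrightarrow> f (m a b) = m (f a) (f b)"
  using aut unfolding automorphic_loop_def by blast

lemma inn_Q: "f \<in> inn_group Q m e \<Longrightarrow> a \<in> Q \<Longrightarrow> f a \<in> Q"
  using mlt_Q inn_mlt by blast

lemma inn_ld: assumes f: "f \<in> inn_group Q m e" and a: "a \<in> Q" and b: "b \<in> Q"
  shows "f (ld a b) = ld (f a) (f b)"
proof -
  have "m (f a) (f (ld a b)) = f b" using inn_hom[OF f a ldQ[OF a b]] a b by simp
  then show ?thesis using ld_uniq inn_Q f a b ldQ by metis
qed

abbreviation U where "U i \<equiv> upper_center Q m e i"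

lemma U_Suc: "U (Suc i) = {a \<in> Q. lc a (U i) \<in> loop_center (quot_carrier Q m (U i)) (quot_mult m (U i)) (U i)}"
  by (simp add: Let_def)

lemma U_0: "U 0 = {e}" by simp

declare upper_center.simps[simp del]

lemma nsub0: "nsub {e}"
  unfolding nsub_def using inn_e by (auto simp: ld_uniq)

lemma lc_e1: "a \<in> Q \<Longrightarrow> lc a {e} = {a}"
  unfolding lcoset_def by auto

definition V1 where "V1 = U (Suc 0)"
definition V2 where "V2 = U (Suc (Suc 0))"
definition V3 where "V3 = U (Suc (Suc (Suc 0)))"

lemma V1m: "a \<in> V1 \<longleftrightarrow> a \<in> Q \<and> (\<forall>g\<in>inn_group Q m e. g a = a)"
proof -
  have "a \<in> V1 \<longleftrightarrow> a \<in> Q \<and> (\<forall>g\<in>inn_group Q m e. lc (g a) {e} = lc a {e})"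
    unfolding V1_def using U_Suc[of 0] UC[OF nsub0, of a] U_0 by auto
  also have "\<dots> \<longleftrightarrow> a \<in> Q \<and> (\<forall>g\<in>inn_group Q m e. g a = a)"
    using lc_e1 inn_Q by auto
  finally show ?thesis .
qed

lemma nsub1: "nsub V1"
proof -
  have 1: "m a b \<in> V1" if a: "a \<in> V1" and b: "b \<in> V1" for a b
  proof -
    have "a \<in> Q" "b \<in> Q" using a b V1m by auto
    moreover have "g (m a b) = m a b" if g: "g \<in> inn_group Q m e" for g
    proof -
      have "g a = a" "g b = b" using a b g V1m by auto
      then show ?thesis using inn_hom[OF g] a b V1m by auto
    qed
    ultimately show ?thesis using V1m by auto
  qed
  have 2: "ld a b \<in> V1" if a: "a \<in> V1" and b: "b \<in> V1" for a b
  proof -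
    have "a \<in> Q" "b \<in> Q" using a b V1m by auto
    moreover have "g (ld a b) = ld a b" if g: "g \<in> inn_group Q m e" for g
    proof -
      have "g a = a" "g b = b" using a b g V1m by auto
      then show ?thesis using inn_ld[OF g] a b V1m by auto
    qed
    ultimately show ?thesis using V1m by auto
  qed
  have 3: "f n \<in> V1" if "f \<in> inn_group Q m e" "n \<in> V1" for f n
  proof -
    have "f n = n" using that V1m by auto
    then show ?thesis using that by simp
  qed
  have 4: "e \<in> V1" using V1m inn_e by simp
  have 5: "V1 \<subseteq> Q" using V1m by auto
  show ?thesis unfolding nsub_def using 1 2 3 4 5 by blast
qed

lemma V2m: "a \<in> V2 \<longleftrightarrow> a \<in> Q \<and> (\<forall>g\<in>inn_group Q m e. lc (g a) V1 = lc a V1)"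
  unfolding V2_def using U_Suc[of "Suc 0"] UC[OF nsub1, of a] unfolding V1_def by auto

lemma nsub2: "nsub V2"
proof -
  note N1 = nsub1
  have sub: "V2 \<subseteq> Q" using V2m by auto
  have "\<forall>g\<in>inn_group Q m e. lc (g e) V1 = lc e V1"
  proof
    fix g assume "g \<in> inn_group Q m e" then have "g e = e" by (rule inn_e)
    then show "lc (g e) V1 = lc e V1" by simp
  qed
  then have e: "e \<in> V2" using V2m by simp
  have mul: "m a b \<in> V2" if a: "a \<in> V2" and b: "b \<in> V2" for a b
  proof -
    have aQ: "a \<in> Q" and bQ: "b \<in> Q" using a b sub by auto
    have "lc (g (m a b)) V1 = lc (m a b) V1" if g: "g \<in> inn_group Q m e" for g
    proof -
      have "lc (g a) V1 = lc a V1" using a g V2m by auto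
      then obtain n1 where n1: "n1 \<in> V1" "g a = m a n1" using C2[OF N1] inn_Q[OF g aQ] aQ by blast
      have "lc (g b) V1 = lc b V1" using b g V2m by auto
      then obtain n2 where n2: "n2 \<in> V1" "g b = m b n2" using C2[OF N1] inn_Q[OF g bQ] bQ by blast
      have "g (m a b) = m (m a n1) (m b n2)" using inn_hom[OF g aQ bQ] n1 n2 by simp
      then show ?thesis using C3[OF N1 aQ bQ n1(1) n2(1)] by simp
    qed
    then show ?thesis using V2m aQ bQ by auto
  qed
  have ldc: "ld a b \<in> V2" if a: "a \<in> V2" and b: "b \<in> V2" for a b
  proof -
    have aQ: "a \<in> Q" and bQ: "b \<in> Q" using a b sub by auto
    have "lc (g (ld a b)) V1 = lc (ld a b) V1" if g: "g \<in> inn_group Q m e" for g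
    proof -
      have "lc (g a) V1 = lc a V1" using a g V2m by auto
      then obtain n1 where n1: "n1 \<in> V1" "g a = m a n1" using C2[OF N1] inn_Q[OF g aQ] aQ by blast
      have "lc (g b) V1 = lc b V1" using b g V2m by auto
      then obtain n2 where n2: "n2 \<in> V1" "g b = m b n2" using C2[OF N1] inn_Q[OF g bQ] bQ by blast
      have n1Q: "n1 \<in> Q" and n2Q: "n2 \<in> Q" using n1 n2 NQ[OF N1] by auto
      define w where "w = g (ld a b)"
      have wQ: "w \<in> Q" unfolding w_def using inn_Q[OF g] aQ bQ by simp
      have w: "m (m a n1) w = m b n2" unfolding w_def using inn_ld[OF g aQ bQ] n1 n2 aQ bQ n1Q n2Q by simp
      have "lc (m a w) V1 = lc (m (m a n1) (m w e)) V1" using C3[OF N1 aQ wQ n1(1) Ne[OF N1]] by simp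
      also have "\<dots> = lc b V1" using w wQ C1[OF N1 bQ n2(1)] by simp
      also have "\<dots> = lc (m a (ld a b)) V1" using aQ bQ by simp
      finally have "lc (m a w) V1 = lc (m a (ld a b)) V1" .
      then have "lc w V1 = lc (ld a b) V1"
        using respects[OF N1 mlt_L[OF aQ, of m] wQ ldQ[OF aQ bQ]] wQ aQ bQ by (simp add: ltrans_def)
      then show ?thesis unfolding w_def .
    qed
    then show ?thesis using V2m aQ bQ by auto
  qed
  have inv: "f n \<in> V2" if f: "f \<in> inn_group Q m e" and n: "n \<in> V2" for f n
  proof -
    have nQ: "n \<in> Q" using n sub by auto
    have "lc (g (f n)) V1 = lc (f n) V1" if g: "g \<in> inn_group Q m e" for g
    proof -
      have "lc ((g \<circ> f) n) V1 = lc n V1" using n inn_comp[OF g f] V2m by blast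
      moreover have "lc (f n) V1 = lc n V1" using n f V2m by auto
      ultimately show ?thesis by simp
    qed
    then show ?thesis using V2m inn_Q[OF f nQ] by auto
  qed
  show ?thesis unfolding nsub_def using sub e mul ldc inv by blast
qed

lemma V3m: "a \<in> V3 \<longleftrightarrow> a \<in> Q \<and> (\<forall>g\<in>inn_group Q m e. lc (g a) V2 = lc a V2)"
  unfolding V3_def using U_Suc[of "Suc (Suc 0)"] UC[OF nsub2, of a] unfolding V2_def by auto

definition Z1 where "Z1 = {z \<in> Q. \<forall>a\<in>Q. \<forall>b\<in>Q. phi a b z = z}"
definition Z2 where "Z2 = {s \<in> Q. \<forall>a\<in>Q. \<forall>b\<in>Q. \<exists>z\<in>Z1. phi a b s = m s z}"

lemma V1Z1: "V1 \<subseteq> Z1"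
proof
  fix z assume z: "z \<in> V1"
  have zQ: "z \<in> Q" using z V1m by auto
  have "phi a b z = z" if a: "a \<in> Q" and b: "b \<in> Q" for a b
  proof -
    have "phif a b z = z" using z V1m phif_inn[OF a b] by auto
    then show ?thesis using phif_eq[OF a b zQ] by simp
  qed
  then show "z \<in> Z1" unfolding Z1_def using zQ by blast
qed

lemma V2Z2: "V2 \<subseteq> Z2"
proof
  fix s assume s: "s \<in> V2"
  have sQ: "s \<in> Q" using s V2m by auto
  have "\<exists>z\<in>Z1. phi a b s = m s z" if a: "a \<in> Q" and b: "b \<in> Q" for a b
  proof -
    have "lc (phif a b s) V1 = lc s V1" using s V2m phif_inn[OF a b] by auto
    then obtain n where "n \<in> V1" "phif a b s = m s n"
      using C2[OF nsub1] inn_Q[OF phif_inn[OF a b] sQ] sQ by blast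
    then show ?thesis using V1Z1 phif_eq a b sQ by auto
  qed
  then show "s \<in> Z2" unfolding Z2_def using sQ by blast
qed

lemma top: assumes "V3 = Q" and c: "c \<in> Q" and a: "a \<in> Q" and b: "b \<in> Q"
  shows "\<exists>s\<in>Z2. phi a b c = m c s"
proof -
  have "lc (phif a b c) V2 = lc c V2" using assms V3m phif_inn[OF a b] by auto
  then obtain n where "n \<in> V2" "phif a b c = m c n"
    using C2[OF nsub2] inn_Q[OF phif_inn[OF a b] c] c by blast
  then show ?thesis using V2Z2 phif_eq a b c by auto
qed

lemma phi_hom: "a \<in> Q \<Longrightarrow> b \<in> Q \<Longrightarrow> c \<in> Q \<Longrightarrow> d \<in> Q \<Longrightarrow> phi a b (m c d) = m (phi a b c) (phi a b d)"
proof -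
  assume a: "a \<in> Q" and b: "b \<in> Q" and c: "c \<in> Q" and d: "d \<in> Q"
  have "phif a b (m c d) = m (phif a b c) (phif a b d)" using inn_hom[OF phif_inn[OF a b] c d] .
  then show ?thesis using phif_eq a b c d by simp
qed

end

context cla begin

lemma phi_ld: assumes a: "a \<in> Q" and b: "b \<in> Q" and c: "c \<in> Q" and d: "d \<in> Q"
  shows "phi a b (ld c d) = ld (phi a b c) (phi a b d)"
proof -
  have "m (phi a b c) (phi a b (ld c d)) = phi a b d" using phi_hom[OF a b c ldQ[OF c d]] c d by simp
  then show ?thesis using ld_uniq phiQ a b c d ldQ by metis
qed

lemma phi_fix1: "a \<in> Q \<Longrightarrow> b \<in> Q \<Longrightarrow> phi a b a = a"
  unfolding phi_def using cm by (metis ld_m mQ)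

lemma transport: assumes p: "p \<in> Q" and q: "q \<in> Q" and a: "a \<in> Q" and b: "b \<in> Q" and c: "c \<in> Q"
  shows "phi p q (phi a b c) = phi (phi p q a) (phi p q b) (phi p q c)"
proof -
  have "phi p q (phi a b c) = ld (phi p q (m a b)) (phi p q (m a (m b c)))"
    unfolding phi_def[of a b c] using phi_ld p q a b c by simp
  also have "\<dots> = ld (m (phi p q a) (phi p q b)) (m (phi p q a) (m (phi p q b) (phi p q c)))"
    using phi_hom p q a b c by simp
  also have "\<dots> = phi (phi p q a) (phi p q b) (phi p q c)" by (simp add: phi_def)
  finally show ?thesis .
qed

lemma Z1Q: "z \<in> Z1 \<Longrightarrow> z \<in> Q" unfolding Z1_def by blast
lemma Z1fix: "z \<in> Z1 \<Longrightarrow> a \<in> Q \<Longrightarrow> b \<in> Q \<Longrightarrow> phi a b z = z" unfolding Z1_def by blast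
lemma Z2Q: "s \<in> Z2 \<Longrightarrow> s \<in> Q" unfolding Z2_def by blast

lemma z1: "z \<in> Z1 \<Longrightarrow> a \<in> Q \<Longrightarrow> b \<in> Q \<Longrightarrow> m a (m b z) = m (m a b) z"
  using phi_eq[of a b z] Z1fix[of z a b] Z1Q[of z] by simp

lemma z2: "z \<in> Z1 \<Longrightarrow> a \<in> Q \<Longrightarrow> b \<in> Q \<Longrightarrow> m (m a z) b = m (m a b) z"
proof -
  assume z: "z \<in> Z1" and a: "a \<in> Q" and b: "b \<in> Q"
  have zQ: "z \<in> Q" using Z1Q z .
  have "m (m a z) b = m b (m a z)" using cm a zQ b by simp
  also have "\<dots> = m (m b a) z" using z1 z b a by simp
  also have "m b a = m a b" using cm a b by simp
  finally show ?thesis .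
qed

lemma z3: "z \<in> Z1 \<Longrightarrow> a \<in> Q \<Longrightarrow> b \<in> Q \<Longrightarrow> m a (m z b) = m (m a b) z"
  using z1[of z a b] cm[of z b] Z1Q[of z] by simp

lemma Z1e[simp]: "e \<in> Z1" unfolding Z1_def using phi_def by (simp add: ld_uniq)

lemma Z1m[intro]: "z \<in> Z1 \<Longrightarrow> w \<in> Z1 \<Longrightarrow> m z w \<in> Z1"
  unfolding Z1_def using phi_hom by auto

lemma Z1ld[intro]: "z \<in> Z1 \<Longrightarrow> w \<in> Z1 \<Longrightarrow> ld z w \<in> Z1"
  unfolding Z1_def using phi_ld by auto

lemma Z1Z2: assumes z: "z \<in> Z1" shows "z \<in> Z2"
proof -
  have "\<exists>w\<in>Z1. phi a b z = m z w" if "a \<in> Q" "b \<in> Q" for a b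
    using Z1fix[OF z that] Z1Q[OF z] Z1e by (intro bexI[of _ e]) simp_all
  then show ?thesis unfolding Z2_def using Z1Q[OF z] by blast
qed

lemma Z2phi: "s \<in> Z2 \<Longrightarrow> a \<in> Q \<Longrightarrow> b \<in> Q \<Longrightarrow> \<exists>z\<in>Z1. phi a b s = m s z"
  unfolding Z2_def by blast

lemma zmul: assumes s: "s \<in> Q" and t: "t \<in> Q" and z: "z \<in> Z1" and w: "w \<in> Z1"
  shows "m (m s z) (m t w) = m (m s t) (m z w)"
proof -
  have Q: "z \<in> Q" "w \<in> Q" using z w Z1Q by auto
  have "m (m s z) (m t w) = m (m (m s z) t) w" using z1 w s t Q by simp
  also have "\<dots> = m (m (m s t) z) w" using z2 z s t by simp
  also have "\<dots> = m (m s t) (m z w)" using z1[OF w] s t Q by simp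
  finally show ?thesis .
qed

lemma Z2m[intro]: assumes s: "s \<in> Z2" and t: "t \<in> Z2" shows "m s t \<in> Z2"
proof -
  have Q: "s \<in> Q" "t \<in> Q" using s t Z2Q by auto
  have "\<exists>z\<in>Z1. phi a b (m s t) = m (m s t) z" if a: "a \<in> Q" and b: "b \<in> Q" for a b
  proof -
    obtain z where z: "z \<in> Z1" "phi a b s = m s z" using Z2phi[OF s a b] by blast
    obtain w where w: "w \<in> Z1" "phi a b t = m t w" using Z2phi[OF t a b] by blast
    note zw = z(1) w(1) z(2) w(2)
    have "phi a b (m s t) = m (m s t) (m z w)" using phi_hom a b Q zw zmul by simp
    then show ?thesis using zw by blast
  qed
  then show ?thesis unfolding Z2_def using Q by blast
qed

lemma Z2ld[intro]: assumes s: "s \<in> Z2" and t: "t \<in> Z2" shows "ld s t \<in> Z2"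
proof -
  have Q: "s \<in> Q" "t \<in> Q" using s t Z2Q by auto
  have "\<exists>z\<in>Z1. phi a b (ld s t) = m (ld s t) z" if a: "a \<in> Q" and b: "b \<in> Q" for a b
  proof -
    obtain z where z: "z \<in> Z1" "phi a b s = m s z" using Z2phi[OF s a b] by blast
    obtain w where w: "w \<in> Z1" "phi a b t = m t w" using Z2phi[OF t a b] by blast
    note zw = z(1) w(1) z(2) w(2)
    have zQ: "z \<in> Q" "w \<in> Q" using zw Z1Q by auto
    have "m (m s z) (m (ld s t) (ld z w)) = m (m s (ld s t)) (m z (ld z w))"
      using zmul[OF Q(1) ldQ[OF Q] zw(1) Z1ld[OF zw(1,2)]] .
    also have "\<dots> = m t w" using Q zQ by simp
    finally have "ld (m s z) (m t w) = m (ld s t) (ld z w)" using ld_uniq Q zQ by simp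
    then have "phi a b (ld s t) = m (ld s t) (ld z w)" using phi_ld a b Q zw by simp
    then show ?thesis using zw Z1ld by blast
  qed
  then show ?thesis unfolding Z2_def using Q by blast
qed


definition E where "E a b c = ld c (phi a b c)"
abbreviation zi where "zi z \<equiv> ld z e"
abbreviation A where "A a b c \<equiv> associator Q m a b c"

lemma EQ[intro,simp]: "a \<in> Q \<Longrightarrow> b \<in> Q \<Longrightarrow> c \<in> Q \<Longrightarrow> E a b c \<in> Q"
  unfolding E_def by simp

lemma E_eq: "a \<in> Q \<Longrightarrow> b \<in> Q \<Longrightarrow> c \<in> Q \<Longrightarrow> phi a b c = m c (E a b c)"
  unfolding E_def by simp

lemma AQ[intro,simp]: "a \<in> Q \<Longrightarrow> b \<in> Q \<Longrightarrow> c \<in> Q \<Longrightarrow> A a b c \<in> Q"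
  unfolding associator_def by simp

lemma A_eq: "a \<in> Q \<Longrightarrow> b \<in> Q \<Longrightarrow> c \<in> Q \<Longrightarrow> m (m a (m b c)) (A a b c) = m (m a b) c"
  unfolding associator_def by simp

lemma E3: assumes a: "a \<in> Q" and b: "b \<in> Q" and s: "s \<in> Z2" shows "E a b s \<in> Z1"
proof -
  obtain z where z: "z \<in> Z1" "phi a b s = m s z" using Z2phi[OF s a b] by blast
  then show ?thesis unfolding E_def using Z2Q[OF s] Z1Q by simp
qed

lemma Ez: "z \<in> Z1 \<Longrightarrow> a \<in> Q \<Longrightarrow> b \<in> Q \<Longrightarrow> E a b z = e"
  unfolding E_def using Z1fix Z1Q by (simp add: ld_uniq)

lemma M1: assumes a: "a \<in> Q" and b: "b \<in> Q" and s: "s \<in> Z2"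
  shows "m a (m b s) = m (m (m a b) s) (E a b s)"
proof -
  have sQ: "s \<in> Q" using Z2Q s .
  have "m a (m b s) = m (m a b) (phi a b s)" using phi_eq a b sQ by simp
  also have "\<dots> = m (m a b) (m s (E a b s))" using E_eq a b sQ by simp
  also have "\<dots> = m (m (m a b) s) (E a b s)" using z1 E3[OF a b s] a b sQ by simp
  finally show ?thesis .
qed

lemma M2: assumes p: "p \<in> Q" and q: "q \<in> Q" and s: "s \<in> Z2"
  shows "m (m p s) q = m (m (m p q) s) (E q p s)"
proof -
  have sQ: "s \<in> Q" using Z2Q s .
  have "m (m p s) q = m q (m p s)" using cm p q sQ by simp
  also have "\<dots> = m (m (m q p) s) (E q p s)" using M1 q p s by simp
  also have "m q p = m p q" using cm p q by simp
  finally show ?thesis .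
qed

lemma Ehom: assumes a: "a \<in> Q" and b: "b \<in> Q" and c: "c \<in> Q" and d: "d \<in> Q"
  and zc: "E a b c \<in> Z1" and zd: "E a b d \<in> Z1"
  shows "E a b (m c d) = m (E a b c) (E a b d)"
proof -
  have "phi a b (m c d) = m (m c (E a b c)) (m d (E a b d))" using phi_hom a b c d E_eq by simp
  also have "\<dots> = m (m c d) (m (E a b c) (E a b d))" using zmul c d zc zd by simp
  finally have "phi a b (m c d) = m (m c d) (m (E a b c) (E a b d))" .
  then have "E a b (m c d) = ld (m c d) (m (m c d) (m (E a b c) (E a b d)))" by (simp add: E_def)
  also have "\<dots> = m (E a b c) (E a b d)" by (rule ld_m) (use c d zc zd Z1Q in auto)
  finally show ?thesis .
qed

lemma ZA: assumes x: "x \<in> Z1" and y: "y \<in> Z1" and z: "z \<in> Z1"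
  shows "m (m x y) z = m x (m y z)"
  using z1[OF z] Z1Q x y by simp

lemma ZC: "x \<in> Z1 \<Longrightarrow> y \<in> Z1 \<Longrightarrow> m x y = m y x"
  using cm Z1Q by simp

lemma Zcan: "x \<in> Z1 \<Longrightarrow> y \<in> Z1 \<Longrightarrow> z \<in> Z1 \<Longrightarrow> m x y = m x z \<Longrightarrow> y = z"
  using lcan Z1Q by blast

lemma A_Z2: assumes a: "a \<in> Q" and b: "b \<in> Q" and u: "u \<in> Z2"
  shows "m (E a b u) (A a b u) = e"
proof -
  have uQ: "u \<in> Q" using Z2Q u .
  define X where "X = m (m a b) u"
  define D where "D = E a b u"
  have D: "D \<in> Z1" unfolding D_def using E3 a b u .
  have DQ: "D \<in> Q" using Z1Q D .
  have XQ: "X \<in> Q" unfolding X_def using a b uQ by simp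
  have 1: "m (m X D) (A a b u) = X" using A_eq[OF a b uQ] M1[OF a b u] unfolding X_def D_def by simp
  have "m (m X D) (zi D) = m X (m D (zi D))" using z1[OF Z1ld[OF D Z1e] XQ DQ] by simp
  also have "\<dots> = X" using DQ XQ by simp
  finally have 2: "m (m X D) (zi D) = X" .
  have "A a b u = zi D" using lcan[of "m X D" "A a b u" "zi D"] 1 2 XQ DQ a b uQ by simp
  then show ?thesis unfolding D_def[symmetric] using DQ by simp
qed

lemma phi_cz1: assumes a: "a \<in> Q" and b: "b \<in> Q" and c: "c \<in> Q" and z: "z \<in> Z1"
  shows "phi (m a z) b c = phi a b c"
proof -
  have zQ: "z \<in> Q" using Z1Q z .
  have "m (m (m a z) b) (phi a b c) = m (m (m a b) z) (phi a b c)" using z2 z a b by simp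
  also have "\<dots> = m (m (m a b) (phi a b c)) z" using z2[OF z, of "m a b" "phi a b c"] a b c by simp
  also have "\<dots> = m (m a (m b c)) z" using phi_eq a b c by simp
  also have "\<dots> = m (m a z) (m b c)" using z2[OF z, of a "m b c"] a b c by simp
  finally show ?thesis unfolding phi_def[of "m a z"] using ld_uniq a b c zQ by simp
qed

lemma phi_cz2: assumes a: "a \<in> Q" and b: "b \<in> Q" and c: "c \<in> Q" and z: "z \<in> Z1"
  shows "phi a (m b z) c = phi a b c"
proof -
  have zQ: "z \<in> Q" using Z1Q z .
  have "m (m a (m b z)) (phi a b c) = m (m (m a b) z) (phi a b c)" using z1 z a b by simp
  also have "\<dots> = m (m (m a b) (phi a b c)) z" using z2[OF z, of "m a b" "phi a b c"] a b c by simp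
  also have "\<dots> = m (m a (m b c)) z" using phi_eq a b c by simp
  also have "\<dots> = m a (m (m b c) z)" using z1[OF z, of a "m b c"] a b c by simp
  also have "\<dots> = m a (m (m b z) c)" using z2 z b c by simp
  finally show ?thesis unfolding phi_def[of a "m b z"] using ld_uniq a b c zQ by simp
qed

lemma CM: assumes a: "a \<in> Q" and c: "c \<in> Q" and s: "s \<in> Z2"
  shows "E a s c \<in> Z1" "m (E c a s) (E a s c) = E a c s"
proof -
  have sQ: "s \<in> Q" using Z2Q s .
  have D1: "E c a s \<in> Z1" and D2: "E a c s \<in> Z1" using E3 a c s by auto
  define \<xi> where "\<xi> = ld (E c a s) (E a c s)"
  have xi: "\<xi> \<in> Z1" unfolding \<xi>_def using D1 D2 by blast
  have xiQ: "\<xi> \<in> Q" using Z1Q xi .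
  have "m (m a s) (m c \<xi>) = m (m (m a s) c) \<xi>" using z1 xi a sQ c by simp
  also have "\<dots> = m (m (m (m a c) s) (E c a s)) \<xi>" using M2 a c s by simp
  also have "\<dots> = m (m (m a c) s) (m (E c a s) \<xi>)" using z1[OF xi] D1 Z1Q a c sQ by simp
  also have "m (E c a s) \<xi> = E a c s" unfolding \<xi>_def using D1 D2 Z1Q by simp
  also have "m (m (m a c) s) (E a c s) = m a (m c s)" using M1 a c s by simp
  also have "\<dots> = m a (m s c)" using cm c sQ by simp
  finally have 1: "m (m a s) (m c \<xi>) = m a (m s c)" .
  have "phi a s c = m c \<xi>" unfolding phi_def by (rule ld_uniq) (use 1 a sQ c xiQ in auto)
  then have "E a s c = \<xi>" unfolding E_def using c xiQ by simp
  then show "E a s c \<in> Z1" "m (E c a s) (E a s c) = E a c s"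
    using xi D1 D2 Z1Q unfolding \<xi>_def by auto
qed

lemma grp1: assumes x: "x \<in> Z1" and y: "y \<in> Z1" and w: "w \<in> Z1" and z: "z \<in> Z1"
  and 1: "m x y = w" and 2: "m w z = x"
  shows "m y z = e"
proof -
  have "m x (m y z) = m (m x y) z" using ZA[OF x y z] by simp
  also have "\<dots> = x" using 1 2 by simp
  also have "\<dots> = m x e" using Z1Q x by simp
  finally show ?thesis using Zcan[OF x _ Z1e] Z1m[OF y z] by blast
qed

lemma anti: assumes a: "a \<in> Q" and c: "c \<in> Q" and s: "s \<in> Z2"
  shows "m (E a s c) (E c s a) = e"
proof -
  have "m (E c a s) (E a s c) = E a c s" "m (E a c s) (E c s a) = E c a s" using CM a c s by auto
  then show ?thesis using grp1[OF E3[OF c a s] CM(1)[OF a c s] E3[OF a c s] CM(1)[OF c a s]] by blast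
qed

lemma Ez1: "a \<in> Q \<Longrightarrow> b \<in> Q \<Longrightarrow> E a b a = e"
  unfolding E_def using phi_fix1 by (simp add: ld_uniq)


lemma E_cz1: "a \<in> Q \<Longrightarrow> b \<in> Q \<Longrightarrow> c \<in> Q \<Longrightarrow> z \<in> Z1 \<Longrightarrow> E (m a z) b c = E a b c"
  unfolding E_def using phi_cz1 by simp

lemma E_cz2: "a \<in> Q \<Longrightarrow> b \<in> Q \<Longrightarrow> c \<in> Q \<Longrightarrow> z \<in> Z1 \<Longrightarrow> E a (m b z) c = E a b c"
  unfolding E_def using phi_cz2 by simp

lemma kill: assumes a: "a \<in> Q" and b: "b \<in> Q" and v: "v \<in> Q" and w: "w \<in> Q"
  and ev: "E a b v \<in> Z1" and ew: "E a b w \<in> Z1" and vw: "m v w \<in> Z1" and k: "E a b w = e"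
  shows "E a b v = e"
proof -
  have "e = E a b (m v w)" using Ez[OF vw a b] by simp
  also have "\<dots> = m (E a b v) (E a b w)" using Ehom[OF a b v w ev ew] .
  also have "\<dots> = E a b v" using k Z1Q ev by simp
  finally show ?thesis by simp
qed

lemma PF: assumes p: "p \<in> Q" and q: "q \<in> Q" and a: "a \<in> Q" and s: "s \<in> Z2" and z: "z \<in> Z1"
  and Ga: "phi p q a = m a z" and c: "c \<in> Q"
  shows "E a s (E p q c) = e"
proof -
  have sQ: "s \<in> Q" using Z2Q s .
  obtain z' where z': "z' \<in> Z1" "phi p q s = m s z'" using Z2phi[OF s p q] by blast
  have GcQ: "phi p q c \<in> Q" using p q c by simp
  have 1: "phi p q (phi a s c) = phi a s (phi p q c)"
  proof -
    have "phi p q (phi a s c) = phi (phi p q a) (phi p q s) (phi p q c)" by (rule transport[OF p q a sQ c])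
    also have "\<dots> = phi (m a z) (m s z') (phi p q c)" using Ga z' by simp
    also have "\<dots> = phi a (m s z') (phi p q c)" using phi_cz1 a z' sQ z GcQ Z1Q by simp
    also have "\<dots> = phi a s (phi p q c)" using phi_cz2 a z' sQ GcQ by simp
    finally show ?thesis .
  qed
  have xc: "E a s c \<in> Z1" using CM(1)[OF a c s] .
  have xG: "E a s (phi p q c) \<in> Z1" using CM(1)[OF a GcQ s] .
  have "phi p q (phi a s c) = m (phi p q c) (E a s c)"
    using E_eq[OF a sQ c] phi_hom[OF p q c] Z1fix[OF xc p q] Z1Q[OF xc] by simp
  moreover have "phi a s (phi p q c) = m (phi p q c) (E a s (phi p q c))" using E_eq[OF a sQ GcQ] .
  ultimately have "m (phi p q c) (E a s (phi p q c)) = m (phi p q c) (E a s c)" using 1 by simp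
  then have 2: "E a s (phi p q c) = E a s c" using lcan[OF GcQ Z1Q[OF xG] Z1Q[OF xc]] by simp
  have ep: "E p q c \<in> Q" using p q c by simp
  have xe: "E a s (E p q c) \<in> Z1" using CM(1)[OF a ep s] .
  have "E a s (phi p q c) = m (E a s c) (E a s (E p q c))"
    using E_eq[OF p q c] Ehom[OF a sQ c ep xc xe] by simp
  then have "m (E a s c) (E a s (E p q c)) = m (E a s c) e" using 2 xc Z1Q by simp
  then show ?thesis using Zcan xc xe Z1e by blast
qed

end

locale calc = cla +
  assumes V3Q: "V3 = Q"
begin


lemma killc: assumes a: "a \<in> Q" and s: "s \<in> Z2" and v: "v \<in> Q" and w: "w \<in> Q"
  and vw: "m v w \<in> Z1" and k: "E a s w = e"
  shows "E a s v = e"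
  using kill[OF a Z2Q[OF s] v w CM(1)[OF a v s] CM(1)[OF a w s] vw k] .

lemma killc': assumes a: "a \<in> Q" and s: "s \<in> Z2" and v: "v \<in> Q" and w: "w \<in> Q"
  and vw: "m w v \<in> Z1" and k: "E a s w = e"
  shows "E a s v = e"
  using killc[OF a s v w _ k] vw cm v w by simp

lemma kill3: assumes a: "a \<in> Q" and b: "b \<in> Q" and v: "v \<in> Z2" and w: "w \<in> Z2"
  and vw: "m v w \<in> Z1" and k: "E a b w = e"
  shows "E a b v = e"
  using kill[OF a b Z2Q[OF v] Z2Q[OF w] E3[OF a b v] E3[OF a b w] vw k] .

lemma inv_uniq: assumes x: "x \<in> Z1" and y: "y \<in> Z1" and z: "z \<in> Z1"
  and 1: "m x y = e" and 2: "m x z = e" shows "y = z"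
  using Zcan[OF x y z] 1 2 by simp

lemma conv3: assumes a: "a \<in> Q" and b: "b \<in> Q" and v: "v \<in> Z2" and w: "w \<in> Z2" and y: "y \<in> Z2"
  and 1: "m y v \<in> Z1" and 2: "m w y \<in> Z1"
  shows "E a b v = E a b w"
proof -
  have h1: "m (E a b y) (E a b v) = e"
    using Ehom[OF a b Z2Q[OF y] Z2Q[OF v] E3[OF a b y] E3[OF a b v]] Ez[OF 1 a b] by simp
  have h2: "m (E a b w) (E a b y) = e"
    using Ehom[OF a b Z2Q[OF w] Z2Q[OF y] E3[OF a b w] E3[OF a b y]] Ez[OF 2 a b] by simp
  then have "m (E a b y) (E a b w) = e" using ZC E3 a b w y by simp
  then show ?thesis using inv_uniq[OF E3[OF a b y] E3[OF a b v] E3[OF a b w] h1] by simp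
qed

lemma star: assumes a: "a \<in> Q" and b: "b \<in> Q" and c: "c \<in> Q" and w: "w \<in> Q"
  shows "phi a (m b c) (phi b c w) = phi (m a b) (phi a b c) (phi a b w)"
proof -
  have bc: "m b c \<in> Q" "phi b c w \<in> Q" "m c w \<in> Q" "m a b \<in> Q" "phi a b c \<in> Q" "phi a b w \<in> Q"
    using a b c w by auto
  have s1: "m a (m (m b c) (phi b c w)) = m (m a (m b c)) (phi a (m b c) (phi b c w))"
    by (rule phi_eq[OF a bc(1,2)])
  have s2: "m b (m c w) = m (m b c) (phi b c w)" by (rule phi_eq[OF b c w])
  have s3: "m a (m b (m c w)) = m (m a b) (phi a b (m c w))" by (rule phi_eq[OF a b bc(3)])
  have s4: "phi a b (m c w) = m (phi a b c) (phi a b w)" by (rule phi_hom[OF a b c w])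
  have s5: "m (m a b) (m (phi a b c) (phi a b w)) = m (m (m a b) (phi a b c)) (phi (m a b) (phi a b c) (phi a b w))"
    by (rule phi_eq[OF bc(4,5,6)])
  have s6: "m a (m b c) = m (m a b) (phi a b c)" by (rule phi_eq[OF a b c])
  have "m (m a (m b c)) (phi a (m b c) (phi b c w)) = m (m a (m b c)) (phi (m a b) (phi a b c) (phi a b w))"
    using s1 s2 s3 s4 s5 s6 by simp
  then show ?thesis using lcan[of "m a (m b c)"] a b c w by simp
qed

lemma cocyc: assumes a: "a \<in> Q" and b: "b \<in> Q" and c: "c \<in> Q" and u: "u \<in> Z2"
  shows "m (E a (m b c) u) (E b c u) = m (E (m a b) (phi a b c) u) (E a b u)"
proof -
  have uQ: "u \<in> Q" using Z2Q u .
  have bc: "m b c \<in> Q" "m a b \<in> Q" "phi a b c \<in> Q" using a b c by auto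
  have k: "E b c u \<in> Z1" "E a b u \<in> Z1" "E a (m b c) u \<in> Z1" "E (m a b) (phi a b c) u \<in> Z1"
    using E3 a b c u bc by auto
  have kQ: "E b c u \<in> Q" "E a b u \<in> Q" "E a (m b c) u \<in> Q" "E (m a b) (phi a b c) u \<in> Q"
    using k Z1Q by auto
  have "phi a (m b c) (phi b c u) = phi a (m b c) (m u (E b c u))" using E_eq b c uQ by simp
  also have "\<dots> = m (phi a (m b c) u) (E b c u)" using phi_hom a bc uQ kQ Z1fix k by simp
  also have "\<dots> = m (m u (E a (m b c) u)) (E b c u)" using E_eq a bc uQ by simp
  also have "\<dots> = m u (m (E a (m b c) u) (E b c u))" using z1[OF k(1)] uQ kQ by simp
  finally have 1: "phi a (m b c) (phi b c u) = m u (m (E a (m b c) u) (E b c u))" .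
  have "phi (m a b) (phi a b c) (phi a b u) = phi (m a b) (phi a b c) (m u (E a b u))" using E_eq a b uQ by simp
  also have "\<dots> = m (phi (m a b) (phi a b c) u) (E a b u)" using phi_hom bc uQ kQ Z1fix k by simp
  also have "\<dots> = m (m u (E (m a b) (phi a b c) u)) (E a b u)" using E_eq bc uQ by simp
  also have "\<dots> = m u (m (E (m a b) (phi a b c) u) (E a b u))" using z1[OF k(2)] uQ kQ by simp
  finally have 2: "phi (m a b) (phi a b c) (phi a b u) = m u (m (E (m a b) (phi a b c) u) (E a b u))" .
  show ?thesis using 1 2 star[OF a b c uQ] lcan uQ kQ by (metis mQ)
qed

lemma SH2: assumes p: "p \<in> Q" and q: "q \<in> Q" and s: "s \<in> Z2" and u: "u \<in> Z2"
  and c1: "E q s u = e" and c2: "E (m p q) s u = e"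
  shows "E p (m q s) u = E p q u"
proof -
  have sQ: "s \<in> Q" using Z2Q s .
  have z: "E p q s \<in> Z1" using E3 p q s by simp
  have "m (E p (m q s) u) (E q s u) = m (E (m p q) (phi p q s) u) (E p q u)"
    using cocyc[OF p q sQ u] .
  also have "phi p q s = m s (E p q s)" using E_eq p q sQ by simp
  also have "E (m p q) (m s (E p q s)) u = E (m p q) s u" using E_cz2 p q sQ z Z2Q[OF u] by simp
  finally show ?thesis using c1 c2 p q sQ Z2Q[OF u] by simp
qed

lemma SH1: assumes p: "p \<in> Q" and q: "q \<in> Q" and s: "s \<in> Z2" and u: "u \<in> Z2"
  and c1: "E p s u = e" and c2: "E (m q p) s u = e" and c3: "E q u s = e"
  shows "E (m p s) q u = E p q u"
proof -
  have sQ: "s \<in> Q" using Z2Q s .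
  have uQ: "u \<in> Q" using Z2Q u .
  have ps: "m p s \<in> Q" using p sQ by simp
  have 1: "m (E q (m p s) u) (E (m p s) u q) = E (m p s) q u" using CM(2)[OF ps q u] .
  have 2: "E q (m p s) u = E q p u" using SH2[OF q p s u c1 c2] .
  have 3: "m (E p q u) (E q u p) = E q p u" using CM(2)[OF q p u] .
  have 4: "m (E (m p s) u q) (E q u (m p s)) = e" using anti[OF ps q u] .
  have 5: "E q u (m p s) = m (E q u p) (E q u s)" using Ehom[OF q uQ p sQ CM(1)[OF q p u] CM(1)[OF q sQ u]] .
  have 6: "E q u (m p s) = E q u p" using 5 c3 CM(1)[OF q p u] Z1Q by simp
  have m: "E p q u \<in> Z1" "E q u p \<in> Z1" "E (m p s) u q \<in> Z1" "E q p u \<in> Z1"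
    using E3 CM(1) p q u ps by auto
  have 7: "m (E q u p) (E (m p s) u q) = e" using 4 6 ZC[OF m(2) m(3)] by simp
  have "E (m p s) q u = m (E q (m p s) u) (E (m p s) u q)" using 1 by simp
  also have "\<dots> = m (E q p u) (E (m p s) u q)" using 2 by simp
  also have "\<dots> = m (m (E p q u) (E q u p)) (E (m p s) u q)" using 3 by simp
  also have "\<dots> = m (E p q u) (m (E q u p) (E (m p s) u q))" by (rule ZA[OF m(1,2,3)])
  also have "\<dots> = E p q u" using 7 Z1Q[OF m(1)] by simp
  finally show ?thesis .
qed

lemma Etop: "a \<in> Q \<Longrightarrow> b \<in> Q \<Longrightarrow> c \<in> Q \<Longrightarrow> E a b c \<in> Z2"
proof -
  assume a: "a \<in> Q" and b: "b \<in> Q" and c: "c \<in> Q"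
  obtain s where s: "s \<in> Z2" "phi a b c = m c s" using top[OF V3Q c a b] by blast
  then show ?thesis unfolding E_def using c Z2Q by simp
qed

lemma R1: assumes a: "a \<in> Q" and b: "b \<in> Q" and c: "c \<in> Q"
  shows "m (A a b c) (E a b c) \<in> Z1"
proof -
  define w where "w = m a b"
  define \<epsilon> where "\<epsilon> = E a b c"
  define X where "X = m w c"
  define Aa where "Aa = A a b c"
  have wQ: "w \<in> Q" unfolding w_def using a b by simp
  have eps: "\<epsilon> \<in> Z2" unfolding \<epsilon>_def using Etop a b c by simp
  have epsQ: "\<epsilon> \<in> Q" using Z2Q eps .
  have XQ: "X \<in> Q" unfolding X_def using wQ c by simp
  have AQ': "Aa \<in> Q" unfolding Aa_def using a b c by simp
  have 0: "m a (m b c) = m w (m c \<epsilon>)" unfolding w_def \<epsilon>_def using phi_eq[OF a b c] E_eq[OF a b c] by simp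
  have 1: "m (m a (m b c)) Aa = X" unfolding X_def w_def Aa_def using A_eq a b c by simp
  define D1 where "D1 = E w c \<epsilon>"
  define D2 where "D2 = E Aa X \<epsilon>"
  define D3 where "D3 = E X Aa \<epsilon>"
  have D: "D1 \<in> Z1" "D2 \<in> Z1" "D3 \<in> Z1" unfolding D1_def D2_def D3_def using E3 eps wQ c XQ AQ' by auto
  have DQ: "D1 \<in> Q" "D2 \<in> Q" "D3 \<in> Q" using D Z1Q by auto
  define P where "P = m (m X Aa) \<epsilon>"
  have PQ: "P \<in> Q" unfolding P_def using XQ AQ' epsQ by simp
  have "m w (m c \<epsilon>) = m (m X \<epsilon>) D1" unfolding X_def D1_def using M1[OF wQ c eps] by simp
  then have "X = m (m (m X \<epsilon>) D1) Aa" using 0 1 by simp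
  also have "\<dots> = m (m (m X \<epsilon>) Aa) D1" using z2[OF D(1)] XQ epsQ AQ' by simp
  also have "m (m X \<epsilon>) Aa = m P D2" unfolding P_def D2_def using M2[OF XQ AQ' eps] by simp
  also have "m (m P D2) D1 = m P (m D2 D1)" using z1[OF D(1)] PQ DQ by simp
  finally have X: "X = m P (m D2 D1)" .
  have 3: "m X (m Aa \<epsilon>) = m P D3" unfolding P_def D3_def using M1[OF XQ AQ' eps] by simp
  define K where "K = ld D3 (m D2 D1)"
  have K: "K \<in> Z1" unfolding K_def using D by blast
  have KQ: "K \<in> Q" using Z1Q K .
  have "m X (m (m Aa \<epsilon>) K) = m (m X (m Aa \<epsilon>)) K" using z1[OF K] XQ AQ' epsQ by simp
  also have "\<dots> = m (m P D3) K" using 3 by simp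
  also have "\<dots> = m P (m D3 K)" using z1[OF K] PQ DQ by simp
  also have "m D3 K = m D2 D1" unfolding K_def using DQ by simp
  also have "m P (m D2 D1) = m X e" using X XQ by simp
  finally have "m (m Aa \<epsilon>) K = e" using lcan XQ AQ' epsQ KQ by (meson mQ eQ)
  then have "m K (m Aa \<epsilon>) = e" using cm KQ AQ' epsQ by simp
  then have "m Aa \<epsilon> = ld K e" using ld_uniq KQ AQ' epsQ by (metis mQ)
  then show ?thesis unfolding Aa_def \<epsilon>_def using Z1ld[OF K Z1e] by simp
qed

lemma A_Z2': assumes a: "a \<in> Q" and b: "b \<in> Q" and c: "c \<in> Q" shows "A a b c \<in> Z2"
proof -
  have eps: "E a b c \<in> Z2" using Etop a b c by simp
  have r: "m (A a b c) (E a b c) \<in> Z1" using R1 a b c by simp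
  have "m (E a b c) (A a b c) = m (A a b c) (E a b c)" using cm a b c by simp
  then have "A a b c = ld (E a b c) (m (A a b c) (E a b c))" using ld_uniq a b c by (metis AQ EQ)
  then show ?thesis using Z2ld[OF eps Z1Z2[OF r]] by simp
qed

lemma R2: assumes a: "a \<in> Q" and b: "b \<in> Q" and c: "c \<in> Q"
  shows "m (A a b c) (A c b a) \<in> Z1"
proof -
  define X where "X = m (m a b) c"
  define Aa where "Aa = A a b c"
  define B where "B = A c b a"
  have XQ: "X \<in> Q" unfolding X_def using a b c by simp
  have Aa: "Aa \<in> Z2" unfolding Aa_def using A_Z2' a b c by simp
  have B: "B \<in> Z2" unfolding B_def using A_Z2' a b c by simp
  have AQ': "Aa \<in> Q" "B \<in> Q" using Aa B Z2Q by auto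
  have 1: "m (m a (m b c)) Aa = X" unfolding X_def Aa_def using A_eq a b c by simp
  have 2: "m (m c (m b a)) B = m (m c b) a" unfolding B_def using A_eq a b c by simp
  have "m c (m b a) = X" unfolding X_def using cm a b c by simp
  moreover have "m (m c b) a = m a (m b c)" using cm a b c by simp
  ultimately have 3: "m X B = m a (m b c)" using 2 by simp
  have "m X (m B Aa) = m (m (m X B) Aa) (E X B Aa)" using M1[OF XQ AQ'(2) Aa] by simp
  also have "\<dots> = m X (E X B Aa)" using 1 3 by simp
  finally have "m B Aa = E X B Aa" using lcan XQ AQ' by (meson EQ mQ)
  then have "m B Aa \<in> Z1" using E3 XQ AQ' Aa by simp
  then show ?thesis unfolding Aa_def B_def using cm AQ' Aa_def B_def by simp
qed

end

context calc begin

lemma A2: "a \<in> Q \<Longrightarrow> b \<in> Q \<Longrightarrow> c \<in> Q \<Longrightarrow> A a b c \<in> Z2" by (rule A_Z2')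

lemma R2': assumes a: "a \<in> Q" and b: "b \<in> Q" and c: "c \<in> Q"
  shows "m (A c b a) (A a b c) \<in> Z1"
  using R2[OF a b c] cm[of "A a b c" "A c b a"] a b c by simp

lemma Afix_e: assumes y: "y \<in> Q" and s: "s \<in> Z2" and t: "t \<in> Z2" and k: "E y s t = e"
  shows "m (m y s) t = m y (m s t)"
proof -
  have sQ: "s \<in> Q" and tQ: "t \<in> Q" using s t Z2Q by auto
  have "m (E y s t) (A y s t) = e" by (rule A_Z2[OF y sQ t])
  then have "A y s t = e" using k y sQ tQ by simp
  then show ?thesis using A_eq[OF y sQ tQ] y sQ tQ by simp
qed

lemma Lem1: assumes x: "x \<in> Q" and y: "y \<in> Q"
  shows "E x y (A x x y) = E x x (A x y y)"
proof -
  define u1 where "u1 = A x x y"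
  define u2 where "u2 = A x y y"
  define e1 where "e1 = E x y y"
  define e2 where "e2 = E x x y"
  have u: "u1 \<in> Z2" "u2 \<in> Z2" unfolding u1_def u2_def using A2 x y by auto
  have ee: "e1 \<in> Z2" "e2 \<in> Z2" unfolding e1_def e2_def using Etop x y by auto
  have uQ: "u1 \<in> Q" "u2 \<in> Q" "e1 \<in> Q" "e2 \<in> Q" using u ee Z2Q by auto
  have r1: "m u1 e2 \<in> Z1" unfolding u1_def e2_def using R1 x y by simp
  have r2: "m u2 e1 \<in> Z1" unfolding u2_def e1_def using R1 x y by simp
  define d1 where "d1 = E x y e2"
  define d2 where "d2 = E x x e1"
  have d: "d1 \<in> Z1" "d2 \<in> Z1" unfolding d1_def d2_def using E3 x y ee by auto
  have dQ: "d1 \<in> Q" "d2 \<in> Q" using d Z1Q by auto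
  have van1: "E y e1 e2 = e"
  proof -
    have w0: "E y e1 (E y x x) = e" by (rule PF[OF y x y ee(1) Z1e _ x]) (use phi_fix1 x y in simp)
    have 1: "m (A y x x) (E y x x) \<in> Z1" using R1 x y by simp
    have k1: "E y e1 (A y x x) = e" by (rule killc[OF y ee(1) _ _ 1 w0]) (use x y in auto)
    have 2: "m u1 (A y x x) \<in> Z1" unfolding u1_def using R2 x y by simp
    have k2: "E y e1 u1 = e" by (rule killc[OF y ee(1) uQ(1) _ 2 k1]) (use x y in auto)
    show ?thesis by (rule killc'[OF y ee(1) uQ(4) uQ(1) r1 k2])
  qed
  have van2: "E y e2 e1 = e"
  proof -
    have w0: "E y e2 (E y y x) = e" by (rule PF[OF y y y ee(2) Z1e _ x]) (use phi_fix1 x y in simp)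
    have 1: "m (A y y x) (E y y x) \<in> Z1" using R1 x y by simp
    have k1: "E y e2 (A y y x) = e" by (rule killc[OF y ee(2) _ _ 1 w0]) (use x y in auto)
    have 2: "m u2 (A y y x) \<in> Z1" unfolding u2_def using R2 x y by simp
    have k2: "E y e2 u2 = e" by (rule killc[OF y ee(2) uQ(2) _ 2 k1]) (use x y in auto)
    show ?thesis by (rule killc'[OF y ee(2) uQ(3) uQ(2) r2 k2])
  qed
  have as1: "m (m y e1) e2 = m y (m e1 e2)" by (rule Afix_e[OF y ee(1) ee(2) van1])
  have as2: "m (m y e2) e1 = m y (m e2 e1)" by (rule Afix_e[OF y ee(2) ee(1) van2])
  have c12: "m e2 e1 = m e1 e2" using cm uQ by simp
  have gH: "phi x y (phi x x y) = phi x x (phi x y y)"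
  proof -
    have "phi x y (phi x x y) = phi (phi x y x) (phi x y x) (phi x y y)" by (rule transport[OF x y x x y])
    then show ?thesis using phi_fix1[OF x y] by simp
  qed
  have L: "phi x y (phi x x y) = m (m y e1) (m e2 d1)"
  proof -
    have "phi x y (phi x x y) = phi x y (m y e2)" unfolding e2_def using E_eq[OF x x y] by simp
    also have "\<dots> = m (phi x y y) (phi x y e2)" by (rule phi_hom[OF x y y uQ(4)])
    also have "\<dots> = m (m y e1) (m e2 d1)" unfolding e1_def d1_def using E_eq[OF x y y] E_eq[OF x y uQ(4)] by simp
    finally show ?thesis .
  qed
  have R: "phi x x (phi x y y) = m (m y e2) (m e1 d2)"
  proof -
    have "phi x x (phi x y y) = phi x x (m y e1)" unfolding e1_def using E_eq[OF x y y] by simp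
    also have "\<dots> = m (phi x x y) (phi x x e1)" by (rule phi_hom[OF x x y uQ(3)])
    also have "\<dots> = m (m y e2) (m e1 d2)" unfolding e2_def d2_def using E_eq[OF x x y] E_eq[OF x x uQ(3)] by simp
    finally show ?thesis .
  qed
  have "m (m y (m e1 e2)) d1 = m (m y (m e1 e2)) d2"
  proof -
    have "m (m y (m e1 e2)) d1 = m (m (m y e1) e2) d1" using as1 by simp
    also have "\<dots> = m (m y e1) (m e2 d1)" using z1[OF d(1)] y uQ by simp
    also have "\<dots> = m (m y e2) (m e1 d2)" using L R gH by simp
    also have "\<dots> = m (m (m y e2) e1) d2" using z1[OF d(2)] y uQ by simp
    also have "\<dots> = m (m y (m e1 e2)) d2" using as2 c12 by simp
    finally show ?thesis .
  qed
  then have dd: "d1 = d2" using lcan y uQ dQ by (meson mQ)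
  have h1: "m (E x y u1) d1 = e"
    using Ehom[OF x y uQ(1) uQ(4) E3[OF x y u(1)] E3[OF x y ee(2)]] Ez[OF r1 x y] unfolding d1_def by simp
  have h2: "m (E x x u2) d2 = e"
    using Ehom[OF x x uQ(2) uQ(3) E3[OF x x u(2)] E3[OF x x ee(1)]] Ez[OF r2 x x] unfolding d2_def by simp
  have "m d1 (E x y u1) = e" using h1 ZC[OF E3[OF x y u(1)] d(1)] by simp
  moreover have "m d1 (E x x u2) = e" using h2 dd ZC[OF E3[OF x x u(2)] d(2)] by simp
  ultimately have "E x y u1 = E x x u2" using inv_uniq[OF d(1) E3[OF x y u(1)] E3[OF x x u(2)]] by blast
  then show ?thesis unfolding u1_def u2_def .
qed


lemma ZLC: "x \<in> Z1 \<Longrightarrow> y \<in> Z1 \<Longrightarrow> z \<in> Z1 \<Longrightarrow> m x (m y z) = m y (m x z)"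
  by (metis ZA ZC)

lemma alg: assumes h: "a1 \<in> Z1" "a2 \<in> Z1" "a3 \<in> Z1" "b1 \<in> Z1" "b2 \<in> Z1" "f \<in> Z1"
  and 1: "m (m a1 a2) a3 = m (m b1 b1) (m (m b2 b2) f)"
  and 2: "m b1 b2 = m a1 a3" and 3: "m a3 f = e"
  shows "a2 = a1"
proof -
  have "m (m a1 a3) a2 = m (m a1 a2) a3" using h by (simp add: ZA ZC ZLC Z1m)
  also have "\<dots> = m (m b1 b1) (m (m b2 b2) f)" by (rule 1)
  also have "\<dots> = m (m (m b1 b2) (m b1 b2)) f" using h by (simp add: ZA ZC ZLC Z1m)
  also have "\<dots> = m (m (m a1 a3) (m a1 a3)) f" using 2 by simp
  also have "\<dots> = m (m a1 a3) (m a1 (m a3 f))" using h by (simp add: ZA ZC ZLC Z1m)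
  also have "\<dots> = m (m a1 a3) a1" using 3 h Z1Q by simp
  finally show ?thesis using Zcan h Z1m by blast
qed


lemma Lem2: assumes x: "x \<in> Q" and y: "y \<in> Q"
  shows "E x y (A x x y) = E y x (A x x y)"
proof -
  define u1 where "u1 = A x x y"
  define e2 where "e2 = E x x y"
  define t where "t = E y x x"
  define Y where "Y = A y x x"
  define P where "P = m x x"
  define w where "w = m y e2"
  define xt where "xt = m x t"
  have Z2s: "u1 \<in> Z2" "e2 \<in> Z2" "t \<in> Z2" "Y \<in> Z2"
    unfolding u1_def e2_def t_def Y_def using A2 Etop x y by auto
  have Qs: "u1 \<in> Q" "e2 \<in> Q" "t \<in> Q" "Y \<in> Q" using Z2s Z2Q by auto
  have PQ: "P \<in> Q" and wQ: "w \<in> Q" and xtQ: "xt \<in> Q" and xyQ: "m x y \<in> Q"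
    unfolding P_def w_def xt_def using x y Qs by auto
  have r1: "m u1 e2 \<in> Z1" unfolding u1_def e2_def using R1 x y by simp
  have rt: "m Y t \<in> Z1" unfolding Y_def t_def using R1 x y by simp
  have rY: "m u1 Y \<in> Z1" unfolding u1_def Y_def using R2 x y by simp
  define K where "K a \<longleftrightarrow> a \<in> Q \<and> (\<forall>s\<in>Z2. E a s u1 = e)" for a
  have Kx: "K x"
  proof -
    have "E x s u1 = e" if s: "s \<in> Z2" for s
    proof -
      have "E x s e2 = e" unfolding e2_def by (rule PF[OF x x x s Z1e _ y]) (use phi_fix1 x in simp)
      then show ?thesis by (rule killc[OF x s Qs(1) Qs(2) r1])
    qed
    then show ?thesis unfolding K_def using x by blast
  qed
  have Ky: "K y"
  proof -
    have "E y s u1 = e" if s: "s \<in> Z2" for s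
    proof -
      have "E y s t = e" unfolding t_def by (rule PF[OF y x y s Z1e _ x]) (use phi_fix1 x y in simp)
      then have "E y s Y = e" by (rule killc[OF y s Qs(4) Qs(3) rt])
      then show ?thesis by (rule killc[OF y s Qs(1) Qs(4) rY])
    qed
    then show ?thesis unfolding K_def using y by blast
  qed
  have KZ: "K r" if r: "r \<in> Z2" for r
  proof -
    have rQ: "r \<in> Q" using Z2Q r .
    have "E r s u1 = e" if s: "s \<in> Z2" for s
    proof -
      have "E r s e2 = e" unfolding e2_def
        by (rule PF[OF x x rQ s E3[OF x x r] _ y]) (rule E_eq[OF x x rQ])
      then show ?thesis by (rule killc[OF rQ s Qs(1) Qs(2) r1])
    qed
    then show ?thesis unfolding K_def using rQ by blast
  qed
  have Km: "K (m a b)" if a: "K a" and b: "K b" for a b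
  proof -
    have aQ: "a \<in> Q" and bQ: "b \<in> Q" using a b unfolding K_def by auto
    have "E (m a b) s u1 = e" if s: "s \<in> Z2" for s
    proof -
      have ea: "E u1 s a = e" using anti[OF aQ Qs(1) s] a s unfolding K_def by (simp add: Qs aQ Z2Q)
      have eb: "E u1 s b = e" using anti[OF bQ Qs(1) s] b s unfolding K_def by (simp add: Qs bQ Z2Q)
      have "E u1 s (m a b) = m (E u1 s a) (E u1 s b)"
        by (rule Ehom[OF Qs(1) Z2Q[OF s] aQ bQ CM(1)[OF Qs(1) aQ s] CM(1)[OF Qs(1) bQ s]])
      then have "E u1 s (m a b) = e" using ea eb by simp
      then show ?thesis using anti[OF mQ[OF aQ bQ] Qs(1) s] CM(1)[OF mQ[OF aQ bQ] Qs(1) s] Z1Q by simp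
    qed
    then show ?thesis unfolding K_def using aQ bQ by blast
  qed
  have Kc: "E q u1 t = e \<and> E q u1 e2 = e" if q: "K q" for q
  proof -
    have qQ: "q \<in> Q" using q unfolding K_def by auto
    have 0: "E q u1 u1 = e" using q Z2s unfolding K_def by auto
    have "E q u1 Y = e" by (rule killc'[OF qQ Z2s(1) Qs(4) Qs(1) rY 0])
    then have 1: "E q u1 t = e" by (rule killc'[OF qQ Z2s(1) Qs(3) Qs(4) rt])
    have 2: "E q u1 e2 = e" by (rule killc'[OF qQ Z2s(1) Qs(2) Qs(1) r1 0])
    show ?thesis using 1 2 by simp
  qed
  have KP: "K P" unfolding P_def using Km Kx by simp
  have Kxy: "K (m x y)" using Km Kx Ky by simp
  have KPt: "K (m P t)" using Km KP KZ Z2s by simp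
  have conv: "E a b t = E a b u1" if "a \<in> Q" "b \<in> Q" for a b
    by (rule conv3[OF that Z2s(3) Z2s(1) Z2s(4) rt rY])
  have E'inv: "m (E y x u1) (E y x e2) = e"
    using Ehom[OF y x Qs(1) Qs(2) E3[OF y x Z2s(1)] E3[OF y x Z2s(2)]] Ez[OF r1 y x] by simp
  have S1: "phi xt xt y = m y (m e2 (E y x e2))"
  proof -
    have "phi y x (phi x x y) = phi (phi y x x) (phi y x x) (phi y x y)" by (rule transport[OF y x x x y])
    also have "phi y x x = xt" unfolding xt_def t_def by (rule E_eq[OF y x x])
    also have "phi y x y = y" by (rule phi_fix1[OF y x])
    finally have 1: "phi y x (phi x x y) = phi xt xt y" .
    have "phi y x (phi x x y) = phi y x (m y e2)" unfolding e2_def using E_eq[OF x x y] by simp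
    also have "\<dots> = m (phi y x y) (phi y x e2)" by (rule phi_hom[OF y x y Qs(2)])
    also have "\<dots> = m y (m e2 (E y x e2))" using phi_fix1[OF y x] E_eq[OF y x Qs(2)] by simp
    finally show ?thesis using 1 by simp
  qed
  define k1 where "k1 = E y x t"
  define Ed where "Ed = E (m x y) x t"
  define Ec where "Ec = E xt (m x y) t"
  define Kw1 where "Kw1 = E w P t"
  define Kw2 where "Kw2 = E w (m P t) t"
  define Kx1 where "Kx1 = E x x t"
  define Kx2 where "Kx2 = E xt x t"
  define E' where "E' = E y x e2"
  have PtQ: "m P t \<in> Q" using PQ Qs by simp
  have Zk: "k1 \<in> Z1" "Ed \<in> Z1" "Ec \<in> Z1" "Kw1 \<in> Z1" "Kw2 \<in> Z1" "Kx1 \<in> Z1" "Kx2 \<in> Z1" "E' \<in> Z1"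
    unfolding k1_def Ed_def Ec_def Kw1_def Kw2_def Kx1_def Kx2_def E'_def
    using E3 x y xyQ xtQ wQ PQ PtQ Z2s by auto
  have Qk: "k1 \<in> Q" "Ed \<in> Q" "Ec \<in> Q" "Kw1 \<in> Q" "Kw2 \<in> Q" "Kx1 \<in> Q" "Kx2 \<in> Q" "E' \<in> Q"
    using Zk Z1Q by auto
  define V where "V = m (m (m P w) t) t"
  define R where "R = m (m P t) t"
  have VQ: "V \<in> Q" and RQ: "R \<in> Q" unfolding V_def R_def using PQ wQ Qs by auto
  have big: "m xt (m xt y) = m V (m (m Ed Ec) k1)"
  proof -
    have a: "m xt y = m (m (m x y) t) k1" unfolding xt_def k1_def by (rule M2[OF x y Z2s(3)])
    have b: "m xt (m (m (m x y) t) k1) = m (m xt (m (m x y) t)) k1"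
      by (rule z1[OF Zk(1) xtQ]) (use xyQ Qs in simp)
    have c: "m xt (m (m x y) t) = m (m (m xt (m x y)) t) Ec" unfolding Ec_def by (rule M1[OF xtQ xyQ Z2s(3)])
    have d: "m xt (m x y) = m (m (m x (m x y)) t) Ed" unfolding xt_def Ed_def by (rule M2[OF x xyQ Z2s(3)])
    have e': "m x (m x y) = m P w" unfolding P_def w_def e2_def using phi_eq[OF x x y] E_eq[OF x x y] by simp
    have f: "m (m (m (m (m P w) t) Ed) t) Ec = m (m V Ed) Ec"
      unfolding V_def using z2[OF Zk(2)] PQ wQ Qs by simp
    have "m xt (m xt y) = m (m (m V Ed) Ec) k1" using a b c d e' f by simp
    also have "\<dots> = m V (m (m Ed Ec) k1)" using z1 Zk Qk VQ by simp
    finally show ?thesis .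
  qed
  have Rw: "m R w = m V (m Kw1 Kw2)"
  proof -
    have f1: "m (m P t) w = m (m (m P w) t) Kw1" unfolding Kw1_def by (rule M2[OF PQ wQ Z2s(3)])
    have f2: "m (m (m P t) t) w = m (m (m (m P t) w) t) Kw2" unfolding Kw2_def by (rule M2[OF PtQ wQ Z2s(3)])
    have "m (m (m (m P t) w) t) Kw2 = m (m (m (m (m P w) t) Kw1) t) Kw2" using f1 by simp
    also have "\<dots> = m (m V Kw1) Kw2" unfolding V_def using z2[OF Zk(4)] PQ wQ Qs by simp
    also have "\<dots> = m V (m Kw1 Kw2)" using z1 Zk Qk VQ by simp
    finally show ?thesis using f2 unfolding R_def by simp
  qed
  have xtxt: "m xt xt = m R (m Kx1 Kx2)"
  proof -
    have g1: "m xt (m x t) = m (m (m xt x) t) Kx2" unfolding Kx2_def by (rule M1[OF xtQ x Z2s(3)])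
    have g2: "m xt x = m (m P t) Kx1" unfolding xt_def P_def Kx1_def by (rule M2[OF x x Z2s(3)])
    have "m xt xt = m (m (m (m P t) Kx1) t) Kx2" using g1 g2 unfolding xt_def by simp
    also have "\<dots> = m (m R Kx1) Kx2" unfolding R_def using z2[OF Zk(6)] PQ Qs by simp
    also have "\<dots> = m R (m Kx1 Kx2)" using z1 Zk Qk RQ by simp
    finally show ?thesis .
  qed
  have main: "m (m Ed Ec) k1 = m (m Kw1 Kw2) (m (m Kx1 Kx2) E')"
  proof -
    have "m xt (m xt y) = m (m xt xt) (phi xt xt y)" by (rule phi_eq[OF xtQ xtQ y])
    also have "phi xt xt y = m w E'" unfolding w_def using S1 z1[OF Zk(8) y Qs(2)] unfolding E'_def by simp
    also have "m (m xt xt) (m w E') = m (m R (m Kx1 Kx2)) (m w E')" using xtxt by simp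
    also have "\<dots> = m (m R w) (m (m Kx1 Kx2) E')" by (rule zmul[OF RQ wQ Z1m[OF Zk(6,7)] Zk(8)])
    also have "\<dots> = m (m V (m Kw1 Kw2)) (m (m Kx1 Kx2) E')" using Rw by simp
    also have "\<dots> = m V (m (m Kw1 Kw2) (m (m Kx1 Kx2) E'))"
      by (rule z1[OF Z1m[OF Z1m[OF Zk(6,7)] Zk(8)] VQ Z1Q[OF Z1m[OF Zk(4,5)]], symmetric])
    finally have "m V (m (m Ed Ec) k1) = m V (m (m Kw1 Kw2) (m (m Kx1 Kx2) E'))" using big by simp
    then show ?thesis
      using lcan[OF VQ Z1Q[OF Z1m[OF Z1m[OF Zk(2,3)] Zk(1)]] Z1Q[OF Z1m[OF Z1m[OF Zk(4,5)] Z1m[OF Z1m[OF Zk(6,7)] Zk(8)]]]] by blast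
  qed
  have xxQ: "m x x \<in> Q" using x by simp
  have KxyX: "K (m (m x y) x)" using Km Kxy Kx by simp
  have KPy: "K (m P y)" using Km KP Ky by simp
  have KPty: "K (m (m P t) y)" using Km KPt Ky by simp
  have KyP: "K (m y P)" using Km KP Ky by simp
  have Kxt: "E x t u1 = e" using Kx Z2s unfolding K_def by auto
  have cEc: "Ec = E x (m x y) u1"
  proof -
    have "Ec = E xt (m x y) u1" unfolding Ec_def using conv xtQ xyQ by simp
    also have "\<dots> = E x (m x y) u1" unfolding xt_def
      by (rule SH1[OF x xyQ Z2s(3) Z2s(1) Kxt]) (use KxyX Z2s Kc Kxy in \<open>auto simp: K_def\<close>)
    finally show ?thesis .
  qed
  have cKx2: "Kx2 = E x x u1"
  proof -
    have "Kx2 = E xt x u1" unfolding Kx2_def using conv xtQ x by simp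
    also have "\<dots> = E x x u1" unfolding xt_def
      by (rule SH1[OF x x Z2s(3) Z2s(1) Kxt]) (use KP Z2s Kc Kx in \<open>auto simp: K_def P_def\<close>)
    finally show ?thesis .
  qed
  have Kye2: "E y e2 u1 = e" using Ky Z2s unfolding K_def by auto
  have cKw1: "Kw1 = E y P u1"
  proof -
    have "Kw1 = E w P u1" unfolding Kw1_def using conv wQ PQ by simp
    also have "\<dots> = E y P u1" unfolding w_def
      by (rule SH1[OF y PQ Z2s(2) Z2s(1) Kye2]) (use KPy Z2s Kc KP in \<open>auto simp: K_def\<close>)
    finally show ?thesis .
  qed
  have cKw2: "Kw2 = E y P u1"
  proof -
    have "Kw2 = E w (m P t) u1" unfolding Kw2_def using conv wQ PtQ by simp
    also have "\<dots> = E y (m P t) u1" unfolding w_def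
      by (rule SH1[OF y PtQ Z2s(2) Z2s(1) Kye2]) (use KPty Z2s Kc KPt in \<open>auto simp: K_def\<close>)
    also have "\<dots> = E y P u1"
      by (rule SH2[OF y PQ Z2s(3) Z2s(1)]) (use KP KyP Z2s in \<open>auto simp: K_def\<close>)
    finally show ?thesis .
  qed
  have ck1: "k1 = E y x u1" unfolding k1_def using conv y x by simp
  have cEd: "Ed = E (m x y) x u1" unfolding Ed_def using conv xyQ x by simp
  have cKx1: "Kx1 = E x x u1" unfolding Kx1_def using conv x by simp
  have coc: "m (E y P u1) (E x x u1) = m (E (m x y) x u1) (E y x u1)"
  proof -
    have "m (E y (m x x) u1) (E x x u1) = m (E (m y x) (phi y x x) u1) (E y x u1)"
      by (rule cocyc[OF y x x Z2s(1)])
    also have "phi y x x = m x t" unfolding t_def by (rule E_eq[OF y x x])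
    also have "E (m y x) (m x t) u1 = E (m y x) x u1"
      by (rule SH2[OF mQ[OF y x] x Z2s(3) Z2s(1) Kxt]) (use KxyX cm x y in \<open>simp add: K_def Z2s\<close>)
    also have "m y x = m x y" using cm x y by simp
    finally show ?thesis unfolding P_def .
  qed
  have ZZ: "E (m x y) x u1 \<in> Z1" "E x (m x y) u1 \<in> Z1" "E y x u1 \<in> Z1" "E y P u1 \<in> Z1" "E x x u1 \<in> Z1"
    using E3 x y xyQ PQ Z2s by auto
  have fin: "E x (m x y) u1 = E (m x y) x u1"
    by (rule alg[OF ZZ Zk(8)]) (use main cEc cKx2 cKw1 cKw2 ck1 cEd cKx1 coc E'inv E'_def in simp_all)
  have chi1: "m (E (m x y) x u1) (E x u1 (m x y)) = E x (m x y) u1" by (rule CM(2)[OF x xyQ Z2s(1)])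
  have chZ: "E x u1 (m x y) \<in> Z1" "E x u1 x \<in> Z1" "E x u1 y \<in> Z1" using CM(1) x y xyQ Z2s by auto
  have "m (E (m x y) x u1) (E x u1 (m x y)) = m (E (m x y) x u1) e" using chi1 fin ZZ Z1Q by simp
  then have "E x u1 (m x y) = e" by (rule Zcan[OF ZZ(1) chZ(1) Z1e])
  moreover have "E x u1 (m x y) = m (E x u1 x) (E x u1 y)"
    by (rule Ehom[OF x Qs(1) x y chZ(2,3)])
  moreover have "E x u1 x = e" by (rule Ez1[OF x Qs(1)])
  ultimately have "E x u1 y = e" using chZ Z1Q by simp
  then have "E x y u1 = m (E y x u1) e" using CM(2)[OF x y Z2s(1)] by simp
  then have "E x y u1 = E y x u1" using Z1Q[OF ZZ(3)] by simp
  then show ?thesis unfolding u1_def .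
qed


lemma invE: assumes a: "a \<in> Q" and b: "b \<in> Q" and v: "v \<in> Z2" and w: "w \<in> Z2" and vw: "m v w \<in> Z1"
  shows "m (E a b v) (E a b w) = e"
  using Ehom[OF a b Z2Q[OF v] Z2Q[OF w] E3[OF a b v] E3[OF a b w]] Ez[OF vw a b] by simp

lemma AE: assumes a: "a \<in> Q" and b: "b \<in> Q" and c: "c \<in> Q" and d: "d \<in> Q"
  and u: "u \<in> Z2" and v: "v \<in> Z2" and eq: "E a b u = E c d v"
  shows "A a b u = A c d v"
proof -
  have 1: "m (E a b u) (A a b u) = e" by (rule A_Z2[OF a b u])
  have 2: "m (E a b u) (A c d v) = e" using A_Z2[OF c d v] eq by simp
  show ?thesis using lcan[of "E a b u" "A a b u" "A c d v"] 1 2 a b c d u v Z2Q by simp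
qed

lemma final: assumes x: "x \<in> Q" and y: "y \<in> Q"
  shows "A x x (A x y y) = A x y (A x x y) \<and> A x y (A x x y) = A y x (A x x y)
       \<and> A x y (A x y y) = A y x (A x y y) \<and> A y x (A x y y) = A y y (A x x y)"
proof -
  define u1 where "u1 = A x x y"
  define u2 where "u2 = A x y y"
  define Y1 where "Y1 = A y x x"
  define Y2 where "Y2 = A y y x"
  have Z: "u1 \<in> Z2" "u2 \<in> Z2" "Y1 \<in> Z2" "Y2 \<in> Z2" unfolding u1_def u2_def Y1_def Y2_def using A2 x y by auto
  have r1: "m u1 Y1 \<in> Z1" unfolding u1_def Y1_def using R2 x y by simp
  have r2: "m u2 Y2 \<in> Z1" unfolding u2_def Y2_def using R2 x y by simp
  have l1: "E x y u1 = E x x u2" unfolding u1_def u2_def by (rule Lem1[OF x y])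
  have l2: "E x y u1 = E y x u1" unfolding u1_def by (rule Lem2[OF x y])
  have l3: "E y x Y2 = E x y Y2" unfolding Y2_def by (rule Lem2[OF y x])
  have l4: "E y x Y2 = E y y Y1" unfolding Y2_def Y1_def by (rule Lem1[OF y x])
  have i1: "m (E x y u2) (E x y Y2) = e" by (rule invE[OF x y Z(2) Z(4) r2])
  have i2: "m (E y x u2) (E y x Y2) = e" by (rule invE[OF y x Z(2) Z(4) r2])
  have i3: "m (E y y u1) (E y y Y1) = e" by (rule invE[OF y y Z(1) Z(3) r1])
  have EZ: "E x y u2 \<in> Z1" "E y x u2 \<in> Z1" "E y y u1 \<in> Z1" "E x y Y2 \<in> Z1" "E y x Y2 \<in> Z1" "E y y Y1 \<in> Z1"
    using E3 x y Z by auto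
  have e3: "E x y u2 = E y x u2"
  proof -
    have "m (E y x Y2) (E x y u2) = e" using i1 l3 ZC EZ by simp
    moreover have "m (E y x Y2) (E y x u2) = e" using i2 ZC EZ by simp
    ultimately show ?thesis using inv_uniq[OF EZ(5) EZ(1) EZ(2)] by blast
  qed
  have e4: "E y x u2 = E y y u1"
  proof -
    have "m (E y x Y2) (E y x u2) = e" using i2 ZC EZ by simp
    moreover have "m (E y x Y2) (E y y u1) = e" using i3 l4 ZC EZ by simp
    ultimately show ?thesis using inv_uniq[OF EZ(5) EZ(2) EZ(3)] by blast
  qed
  have "A x x u2 = A x y u1" by (rule AE[OF x x x y Z(2) Z(1)]) (use l1 in simp)
  moreover have "A x y u1 = A y x u1" by (rule AE[OF x y y x Z(1) Z(1) l2])
  moreover have "A x y u2 = A y x u2" by (rule AE[OF x y y x Z(2) Z(2) e3])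
  moreover have "A y x u2 = A y y u1" by (rule AE[OF y x y y Z(2) Z(1) e4])
  ultimately show ?thesis unfolding u1_def u2_def by simp
qed

end

theorem lemma4p1:
  fixes Q :: "'a set" and m :: "'a \<Rightarrow> 'a \<Rightarrow> 'a" and e x y :: 'a
  assumes "commutative_loop Q m e" and "automorphic_loop Q m e"
    and "nilpotency_class Q m e 3"
    and "x \<in> Q" and "y \<in> Q"
  defines "u1 \<equiv> associator Q m x x y"
    and "u2 \<equiv> associator Q m x y y"
  defines "z2 \<equiv> associator Q m x x u2"
    and "z3 \<equiv> associator Q m x y u1"
    and "z4 \<equiv> associator Q m x y u2"
    and "z5 \<equiv> associator Q m y x u1"
    and "z6 \<equiv> associator Q m y x u2"
    and "z7 \<equiv> associator Q m y y u1"
  shows "z2 = z3 \<and> z3 = z5 \<and> z4 = z6 \<and> z6 = z7"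
proof -
  have lp: "loop Q m e" and cm: "\<And>a b. a \<in> Q \<Longrightarrow> b \<in> Q \<Longrightarrow> m a b = m b a"
    using assms(1) unfolding commutative_loop_def by auto
  interpret cl Q m e by (rule cl.intro[OF lp cm])
  interpret cla Q m e by (rule cla.intro) (unfold_locales, rule assms(2))
  have "upper_center Q m e 3 = Q" using assms(3) unfolding nilpotency_class_def by simp
  moreover have "(3::nat) = Suc (Suc (Suc 0))" by simp
  ultimately have "V3 = Q" unfolding V3_def by simp
  then interpret calc Q m e by unfold_locales
  show ?thesis using final[OF assms(4,5)] unfolding u1_def u2_def z2_def z3_def z4_def z5_def z6_def z7_def
    by simp
qed

end
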